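(* Let $k\ge1$ and suppose $\delta\notin\bigcup_{j=1}^kI_j$, where $I_j=\{-\frac{p}{2(n+1)}:p\in\{j-1,\dots,2j-2\}\}$. Then \[R^k=\bigoplus_{l=0}^k s^l\big(R^{k-l}\cap\ker i(\alpha)\big),\] where $s^l:R^{k-l}\to R^k$ denotes the composite $s_{k-1}\circ s_{k-2}\circ\cdots\circ s_{k-l}$ ($s^0=\mathrm{Id}$), and for $j\ge1$, $s_{j-1}:R^{j-1}\to R^j$ is $s_{j-1}(S)=-\sum_{l=1}^jb_{j,l}X^l(i(\alpha)^{l-1}(S))$ with $b_{j,l}=\big(\prod_{m=1}^l(-r(m,j-m))\big)^{-1}$.
   Context: Let $n\ge1$, $M=\mathbb{R}^{2n+1}$ with coordinates $(q^1,\dots,q^n,p^1,\dots,p^n,t)$. For $\mu\in\mathbb{R}$, $\mathcal{S}^k_\mu$ denotes the space of smooth functions $S(x,\xi)$ on $M\times\mathbb{R}^{2n+1}$ homogeneous polynomial of degree $k$ in $\xi=(\xi_{q^1},\dots,\xi_{q^n},\xi_{p^1},\dots,\xi_{p^n},\xi_t)$. Fix $\delta\in\mathbb{R}$ and set $R^k=\mathcal{S}^k_{\delta+\frac{k}{n+1}}$ for $k\ge0$, $R^{j}=0$ for $j<0$. Let $E_s=\sum_i(p^i\partial_{p^i}+q^i\partial_{q^i})$, $\langle E_s,\xi\rangle=\sum_i(p^i\xi_{p^i}+q^i\xi_{q^i})$, $D(S)=\sum_i(\xi_{q^i}\partial_{p^i}S-\xi_{p^i}\partial_{q^i}S)+\xi_tE_s(S)-\langle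 E_s,\xi\rangle\partial_tS$. Operators: $i(\alpha):R^k\to R^{k-1}$, $i(\alpha)(S)=\frac12\big(\sum_i(p^i\partial_{\xi_{q^i}}S-q^i\partial_{\xi_{p^i}}S)-\partial_{\xi_t}S\big)$; $X:R^k\to R^{k+1}$, $X(S)=D(S)+(2(n+1)\delta+k)\xi_tS$. Set $r(l,k)=-\frac{l}{2}\big(2(n+1)\delta+2k+l-1\big)$. *)

theory Defs
  imports "HOL-Analysis.Analysis" "HOL-Library.Function_Algebras"
begin

text \<open>Points of M = R^(2n+1) are triples (q, p, t) with q, p :: real^'n, where n = CARD('n).
  Covectors xi = (xi_q, xi_p, xi_t) have the same shape. A symbol is a function S x xi.\<close>

type_synonym 'n pt = "(real^'n) \<times> (real^'n) \<times> real"
type_synonym 'n sym = "'n pt \<Rightarrow> 'n pt \<Rightarrow> real"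

definition qc :: "'n::finite pt \<Rightarrow> 'n \<Rightarrow> real" where "qc x i = fst x $ i"
definition pc :: "'n::finite pt \<Rightarrow> 'n \<Rightarrow> real" where "pc x i = fst (snd x) $ i"
definition tc :: "'n::finite pt \<Rightarrow> real" where "tc x = snd (snd x)"

definition eq :: "'n::finite \<Rightarrow> 'n pt" where "eq i = (axis i 1, 0, 0)"
definition ep :: "'n::finite \<Rightarrow> 'n pt" where "ep i = (0, axis i 1, 0)"
definition et :: "'n::finite pt" where "et = (0, 0, 1)"

definition dd :: "'a::real_normed_vector \<Rightarrow> ('a \<Rightarrow> real) \<Rightarrow> 'a \<Rightarrow> real" where
  "dd v f x = deriv (\<lambda>h. f (x + h *\<^sub>R v)) 0"

fun iter_dd :: "'a::real_normed_vector list \<Rightarrow> ('a \<Rightarrow> real) \<Rightarrow> 'a \<Rightarrow> real" where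
  "iter_dd [] f = f"
| "iter_dd (v # vs) f = dd v (iter_dd vs f)"

definition smooth :: "('a::real_normed_vector \<Rightarrow> real) \<Rightarrow> bool" where
  "smooth f \<longleftrightarrow> (\<forall>vs x. iter_dd vs f differentiable (at x))"

text \<open>Multi-indices (a, b, c) for the monomial xi_q^a xi_p^b xi_t^c.\<close>
definition mdeg :: "('n::finite \<Rightarrow> nat) \<times> ('n \<Rightarrow> nat) \<times> nat \<Rightarrow> nat" where
  "mdeg m = (case m of (a, b, c) \<Rightarrow> sum a UNIV + sum b UNIV + c)"

definition mono :: "('n::finite \<Rightarrow> nat) \<times> ('n \<Rightarrow> nat) \<times> nat \<Rightarrow> 'n pt \<Rightarrow> real" where
  "mono m xi = (case m of (a, b, c) \<Rightarrow>
     (\<Prod>i\<in>UNIV. qc xi i ^ a i) * (\<Prod>i\<in>UNIV. pc xi i ^ b i) * tc xi ^ c)"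

text \<open>R^k: smooth functions homogeneous polynomial of degree k in xi
  (the density weight does not affect the underlying space of functions).\<close>
definition inR :: "nat \<Rightarrow> 'n::finite sym \<Rightarrow> bool" where
  "inR k S \<longleftrightarrow> (\<exists>a. (\<forall>m. smooth (a m)) \<and>
      (\<forall>x xi. S x xi = (\<Sum>m\<in>{m. mdeg m = k}. a m x * mono m xi)))"

definition pdx :: "'n::finite pt \<Rightarrow> 'n sym \<Rightarrow> 'n sym" where
  "pdx v S x xi = dd v (\<lambda>y. S y xi) x"
definition pdxi :: "'n::finite pt \<Rightarrow> 'n sym \<Rightarrow> 'n sym" where
  "pdxi v S x xi = dd v (\<lambda>eta. S x eta) xi"

definition ialpha :: "'n::finite sym \<Rightarrow> 'n sym" where
  "ialpha S x xi = 1/2 * ((\<Sum>i\<in>UNIV. pc x i * pdxi (eq i) S x xi - qc x i * pdxi (ep i) S x xi)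
                          - pdxi et S x xi)"

definition Es :: "'n::finite sym \<Rightarrow> 'n sym" where
  "Es S x xi = (\<Sum>i\<in>UNIV. pc x i * pdx (ep i) S x xi + qc x i * pdx (eq i) S x xi)"

definition Es_xi :: "'n::finite pt \<Rightarrow> 'n pt \<Rightarrow> real" where
  "Es_xi x xi = (\<Sum>i\<in>UNIV. pc x i * pc xi i + qc x i * qc xi i)"

definition Dop :: "'n::finite sym \<Rightarrow> 'n sym" where
  "Dop S x xi = (\<Sum>i\<in>UNIV. qc xi i * pdx (ep i) S x xi - pc xi i * pdx (eq i) S x xi)
     + tc xi * Es S x xi - Es_xi x xi * pdx et S x xi"

definition Xop :: "real \<Rightarrow> nat \<Rightarrow> 'n::finite sym \<Rightarrow> 'n sym" where
  "Xop \<delta> k S x xi = Dop S x xi + (2 * (real CARD('n) + 1) * \<delta> + real k) * tc xi * S x xi"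

fun Xpow :: "real \<Rightarrow> nat \<Rightarrow> nat \<Rightarrow> 'n::finite sym \<Rightarrow> 'n sym" where
  "Xpow \<delta> m 0 S = S"
| "Xpow \<delta> m (Suc l) S = Xop \<delta> (m + l) (Xpow \<delta> m l S)"

definition rr :: "nat \<Rightarrow> real \<Rightarrow> real \<Rightarrow> real \<Rightarrow> real" where
  "rr n \<delta> l k = - (l / 2) * (2 * (real n + 1) * \<delta> + 2 * k + l - 1)"

definition bb :: "nat \<Rightarrow> real \<Rightarrow> nat \<Rightarrow> nat \<Rightarrow> real" where
  "bb n \<delta> j l = inverse (\<Prod>m\<in>{1..l}. - rr n \<delta> (real m) (real j - real m))"

text \<open>smap \<delta> m = s_m : R^m \<rightarrow> R^(m+1) (here j = m+1).\<close>
definition smap :: "real \<Rightarrow> nat \<Rightarrow> 'n::finite sym \<Rightarrow> 'n sym" where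
  "smap \<delta> m S x xi = - (\<Sum>l\<in>{1..m+1}. bb CARD('n) \<delta> (m+1) l *
                     Xpow \<delta> (m + 1 - l) l ((ialpha ^^ (l - 1)) S) x xi)"

fun spow :: "real \<Rightarrow> nat \<Rightarrow> nat \<Rightarrow> 'n::finite sym \<Rightarrow> 'n sym" where
  "spow \<delta> k 0 = id"
| "spow \<delta> k (Suc l) = smap \<delta> (k - 1) \<circ> spow \<delta> (k - 1) l"

definition Wsum :: "real \<Rightarrow> nat \<Rightarrow> nat \<Rightarrow> 'n::finite sym set" where
  "Wsum \<delta> k l = spow \<delta> k l ` {S. inR (k - l) S \<and> ialpha S = 0}"

end

theory Submission
  imports Defs
begin


lemma dd_has_derivative:
  assumes "(f has_derivative F) (at x)"
  shows "dd v f x = F v"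
proof -
  have bl: "bounded_linear F" using assms has_derivative_bounded_linear by blast
  have l: "((\<lambda>h::real. x + h *\<^sub>R v) has_derivative (\<lambda>h. h *\<^sub>R v)) (at 0)"
    by (auto intro!: derivative_eq_intros)
  have "((\<lambda>h::real. f (x + h *\<^sub>R v)) has_derivative (\<lambda>h. F (h *\<^sub>R v))) (at 0)"
    using has_derivative_compose[OF l] assms by (simp add: o_def)
  moreover have "(\<lambda>h. F (h *\<^sub>R v)) = (\<lambda>h. F v * h)"
    using linear_scale[OF bounded_linear.linear[OF bl]] by (simp add: mult.commute)
  ultimately have "((\<lambda>h::real. f (x + h *\<^sub>R v)) has_field_derivative F v) (at 0)"
    by (simp add: has_field_derivative_def)
  then show ?thesis unfolding dd_def by (rule DERIV_imp_deriv)
qed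

lemma dd_add:
  assumes "f differentiable (at x)" "g differentiable (at x)"
  shows "dd v (\<lambda>y. f y + g y) x = dd v f x + dd v g x"
proof -
  obtain F G where "(f has_derivative F) (at x)" "(g has_derivative G) (at x)"
    using assms by (auto simp: differentiable_def)
  then show ?thesis using has_derivative_add dd_has_derivative by metis
qed

lemma dd_diff:
  assumes "f differentiable (at x)" "g differentiable (at x)"
  shows "dd v (\<lambda>y. f y - g y) x = dd v f x - dd v g x"
proof -
  obtain F G where "(f has_derivative F) (at x)" "(g has_derivative G) (at x)"
    using assms by (auto simp: differentiable_def)
  then show ?thesis using has_derivative_diff dd_has_derivative by metis
qed

lemma dd_mult:
  fixes f g :: "'a::real_normed_vector \<Rightarrow> real"
  assumes "f differentiable (at x)" "g differentiable (at x)"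
  shows "dd v (\<lambda>y. f y * g y) x = dd v f x * g x + f x * dd v g x"
proof -
  obtain F G where FG: "(f has_derivative F) (at x)" "(g has_derivative G) (at x)"
    using assms by (auto simp: differentiable_def)
  have "((\<lambda>y. f y * g y) has_derivative (\<lambda>h. f x * G h + F h * g x)) (at x)"
    using has_derivative_mult[OF FG] .
  then have "dd v (\<lambda>y. f y * g y) x = f x * G v + F v * g x" by (rule dd_has_derivative)
  with dd_has_derivative[OF FG(1)] dd_has_derivative[OF FG(2)] show ?thesis by simp
qed

lemma dd_cmult:
  fixes f :: "'a::real_normed_vector \<Rightarrow> real"
  assumes "f differentiable (at x)"
  shows "dd v (\<lambda>y. c * f y) x = c * dd v f x"
proof -
  obtain F where F: "(f has_derivative F) (at x)"
    using assms by (auto simp: differentiable_def)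
  have "((\<lambda>y. c * f y) has_derivative (\<lambda>h. c * F h)) (at x)"
    using has_derivative_mult_right[OF F] .
  then show ?thesis using F dd_has_derivative by metis
qed

lemma dd_const: "dd v (\<lambda>y. c) x = 0"
proof -
  have "dd v (\<lambda>y. c) x = (\<lambda>h. 0) v" by (rule dd_has_derivative) simp
  then show ?thesis by simp
qed

lemma dd_linear: "bounded_linear f \<Longrightarrow> dd v f x = f v"
  using dd_has_derivative bounded_linear.has_derivative[of f "\<lambda>x. x"] 
  by (metis bounded_linear.has_derivative has_derivative_ident)

lemma dd_sum:
  fixes f :: "'i \<Rightarrow> 'a::real_normed_vector \<Rightarrow> real"
  assumes "finite I" "\<And>i. i \<in> I \<Longrightarrow> f i differentiable (at x)"
  shows "dd v (\<lambda>y. \<Sum>i\<in>I. f i y) x = (\<Sum>i\<in>I. dd v (f i) x)"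
proof -
  have "\<forall>i\<in>I. \<exists>F. (f i has_derivative F) (at x)" using assms(2) by (auto simp: differentiable_def)
  then obtain F where F: "\<And>i. i \<in> I \<Longrightarrow> (f i has_derivative F i) (at x)" by metis
  have "((\<lambda>y. \<Sum>i\<in>I. f i y) has_derivative (\<lambda>h. \<Sum>i\<in>I. F i h)) (at x)"
    by (rule has_derivative_sum) (use F in auto)
  then have "dd v (\<lambda>y. \<Sum>i\<in>I. f i y) x = (\<Sum>i\<in>I. F i v)" by (rule dd_has_derivative)
  also have "\<dots> = (\<Sum>i\<in>I. dd v (f i) x)" by (intro sum.cong refl) (simp add: dd_has_derivative[OF F])
  finally show ?thesis .
qed


lemma iter_dd_snoc: "iter_dd vs (dd v f) = iter_dd (vs @ [v]) f"
  by (induct vs) auto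

lemma smooth_dd: "smooth f \<Longrightarrow> smooth (dd v f)"
  unfolding smooth_def iter_dd_snoc by blast

lemma smooth_differentiable: "smooth f \<Longrightarrow> f differentiable (at x)"
  unfolding smooth_def by (metis iter_dd.simps(1))

lemma iter_dd_add:
  assumes "smooth f" "smooth g"
  shows "iter_dd vs (\<lambda>x. f x + g x) = (\<lambda>x. iter_dd vs f x + iter_dd vs g x)"
proof (induct vs)
  case Nil then show ?case by simp
next
  case (Cons v vs)
  have "iter_dd (v # vs) (\<lambda>x. f x + g x) = dd v (\<lambda>x. iter_dd vs f x + iter_dd vs g x)"
    using Cons by simp
  also have "\<dots> = (\<lambda>x. dd v (iter_dd vs f) x + dd v (iter_dd vs g) x)"
    using assms unfolding smooth_def by (intro ext dd_add) auto
  finally show ?case by simp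
qed

lemma smooth_add: "smooth f \<Longrightarrow> smooth g \<Longrightarrow> smooth (\<lambda>x. f x + g x)"
  unfolding smooth_def
  by (subst iter_dd_add) (auto simp: smooth_def intro: differentiable_add)

lemma iter_dd_cmult:
  assumes "smooth f"
  shows "iter_dd vs (\<lambda>x. c * f x) = (\<lambda>x. c * iter_dd vs f x)"
proof (induct vs)
  case Nil then show ?case by simp
next
  case (Cons v vs)
  have "iter_dd (v # vs) (\<lambda>x. c * f x) = dd v (\<lambda>x. c * iter_dd vs f x)"
    using Cons by simp
  also have "\<dots> = (\<lambda>x. c * dd v (iter_dd vs f) x)"
    using assms unfolding smooth_def by (intro ext dd_cmult) auto
  finally show ?case by simp
qed

lemma smooth_cmult: "smooth f \<Longrightarrow> smooth (\<lambda>x. c * f x)"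
  unfolding smooth_def
  by (subst iter_dd_cmult) (auto simp: smooth_def intro: differentiable_mult differentiable_const)

lemma iter_dd_zero: "iter_dd vs (\<lambda>x. 0) = (\<lambda>x. 0)"
  by (induct vs) (auto simp: dd_const)

lemma smooth_zero: "smooth (\<lambda>x. 0)"
  unfolding smooth_def iter_dd_zero by simp

lemma smooth_lin_mult_aux:
  assumes l: "bounded_linear l"
  shows "\<forall>f g. smooth f \<and> smooth g \<longrightarrow>
     (\<exists>f' g'. smooth f' \<and> smooth g' \<and> iter_dd vs (\<lambda>x. l x * f x + g x) = (\<lambda>x. l x * f' x + g' x))"
proof (induct vs)
  case Nil then show ?case by auto
next
  case (Cons v vs)
  show ?case
  proof (intro allI impI)
    fix f g :: "'a \<Rightarrow> real" assume fg: "smooth f \<and> smooth g"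
    then obtain f' g' where f'g': "smooth f'" "smooth g'"
      "iter_dd vs (\<lambda>x. l x * f x + g x) = (\<lambda>x. l x * f' x + g' x)" using Cons by blast
    have ld: "\<And>x. l differentiable (at x)"
      using l bounded_linear_imp_differentiable by blast
    have "iter_dd (v # vs) (\<lambda>x. l x * f x + g x) = dd v (\<lambda>x. l x * f' x + g' x)"
      using f'g' by simp
    also have "\<dots> = (\<lambda>x. l x * dd v f' x + (l v * f' x + dd v g' x))"
    proof
      fix x
      have "dd v (\<lambda>x. l x * f' x + g' x) x = dd v (\<lambda>x. l x * f' x) x + dd v g' x"
        by (rule dd_add[OF differentiable_mult[OF ld smooth_differentiable[OF f'g'(1)]] smooth_differentiable[OF f'g'(2)]])
      also have "dd v (\<lambda>x. l x * f' x) x = dd v l x * f' x + l x * dd v f' x"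
        by (rule dd_mult[OF ld smooth_differentiable[OF f'g'(1)]])
      finally show "dd v (\<lambda>x. l x * f' x + g' x) x = l x * dd v f' x + (l v * f' x + dd v g' x)"
        using dd_linear[OF l] by simp
    qed
    finally show "\<exists>f' g'. smooth f' \<and> smooth g' \<and>
        iter_dd (v # vs) (\<lambda>x. l x * f x + g x) = (\<lambda>x. l x * f' x + g' x)"
      using f'g' by (intro exI[of _ "dd v f'"] exI[of _ "\<lambda>x. l v * f' x + dd v g' x"])
        (auto intro!: smooth_dd smooth_add smooth_cmult)
  qed
qed

lemma smooth_lin_mult:
  assumes l: "bounded_linear l" and f: "smooth f"
  shows "smooth (\<lambda>x. l x * f x)"
  unfolding smooth_def
proof (intro allI)
  fix vs x
  obtain f' g' where fg: "smooth f'" "smooth g'"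
    "iter_dd vs (\<lambda>x. l x * f x + 0) = (\<lambda>x. l x * f' x + g' x)"
    using smooth_lin_mult_aux[OF l, of vs] f smooth_zero by blast
  have ld: "l differentiable (at x)"
    using l bounded_linear_imp_differentiable by blast
  show "iter_dd vs (\<lambda>x. l x * f x) differentiable (at x)"
    unfolding fg(3)[simplified]
    by (rule differentiable_add[OF differentiable_mult[OF ld smooth_differentiable[OF fg(1)]] smooth_differentiable[OF fg(2)]])
qed

lemma bl_qc: "bounded_linear (\<lambda>x. qc x i)"
  unfolding qc_def by (intro bounded_linear_compose[OF bounded_linear_vec_nth] bounded_linear_fst)
lemma bl_pc: "bounded_linear (\<lambda>x. pc x i)"
  unfolding pc_def by (intro bounded_linear_compose[OF bounded_linear_vec_nth] bounded_linear_fst_comp bounded_linear_snd)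
lemma bl_tc: "bounded_linear tc"
proof -
  have "bounded_linear (\<lambda>x::'n::finite pt. snd (snd x))" by (intro bounded_linear_snd_comp bounded_linear_snd)
  then show ?thesis unfolding tc_def[abs_def] .
qed

lemma coord_simps [simp]:
  "qc (x + y) i = qc x i + qc y i" "pc (x + y) i = pc x i + pc y i" "tc (x + y) = tc x + tc y"
  "qc (c *\<^sub>R x) i = c * qc x i" "pc (c *\<^sub>R x) i = c * pc x i" "tc (c *\<^sub>R x) = c * tc x"
  "qc (eq j) i = (if i = j then 1 else 0)" "pc (eq j) i = 0" "tc (eq j) = 0"
  "qc (ep j) i = 0" "pc (ep j) i = (if i = j then 1 else 0)" "tc (ep j) = 0"
  "qc et i = 0" "pc et i = 0" "tc et = 1"
  by (auto simp: qc_def pc_def tc_def eq_def ep_def et_def axis_def)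


lemma differentiable_prod':
  fixes f :: "'i \<Rightarrow> 'a::real_normed_vector \<Rightarrow> real"
  shows "finite I \<Longrightarrow> (\<And>i. i \<in> I \<Longrightarrow> f i differentiable (at x)) \<Longrightarrow> (\<lambda>x. \<Prod>i\<in>I. f i x) differentiable (at x)"
  by (induct I rule: finite_induct) (auto intro!: differentiable_mult)

lemma bl_diff: "bounded_linear l \<Longrightarrow> l differentiable F"
  by (simp add: bounded_linear_imp_differentiable)

lemma mono_differentiable: "mono m differentiable (at xi)"
proof -
  obtain a b c where m: "m = (a, b, c)" by (cases m) auto
  have "(\<lambda>xi. (\<Prod>i\<in>UNIV. qc xi i ^ a i) * (\<Prod>i\<in>UNIV. pc xi i ^ b i) * tc xi ^ c) differentiable (at xi)"
    by (intro differentiable_mult differentiable_prod' differentiable_power bl_diff bl_qc bl_pc bl_tc) auto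
  then show ?thesis unfolding m mono_def[abs_def] by simp
qed

lemma finite_Mset: "finite {m :: ('n::finite \<Rightarrow> nat) \<times> ('n \<Rightarrow> nat) \<times> nat. mdeg m = k}"
proof -
  let ?A = "Pi\<^sub>E UNIV (\<lambda>_::'n. {..k})"
  have "{m :: ('n \<Rightarrow> nat) \<times> ('n \<Rightarrow> nat) \<times> nat. mdeg m = k} \<subseteq> ?A \<times> ?A \<times> {..k}"
  proof
    fix m :: "('n \<Rightarrow> nat) \<times> ('n \<Rightarrow> nat) \<times> nat" assume "m \<in> {m. mdeg m = k}"
    moreover obtain a b c where m: "m = (a, b, c)" by (cases m) auto
    ultimately have k: "sum a UNIV + sum b UNIV + c = k" by (simp add: mdeg_def)
    have "\<And>i. a i \<le> sum a UNIV" "\<And>i. b i \<le> sum b UNIV"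
      by (auto intro: member_le_sum)
    with k show "m \<in> ?A \<times> ?A \<times> {..k}" unfolding m PiE_UNIV_domain
      by (auto simp: Pi_def) (metis le_add1 le_trans add.commute)+
  qed
  moreover have "finite (?A \<times> ?A \<times> {..k})" by (intro finite_cartesian_product finite_PiE) auto
  ultimately show ?thesis by (rule finite_subset)
qed

lemma inR_zero: "inR k (\<lambda>x xi. 0)"
  unfolding inR_def by (intro exI[of _ "\<lambda>m x. 0"]) (auto simp: smooth_zero)

lemma inR_zero': "inR k 0"
  using inR_zero by (simp add: zero_fun_def)

lemma inR_add: "inR k S \<Longrightarrow> inR k T \<Longrightarrow> inR k (\<lambda>x xi. S x xi + T x xi)"
  unfolding inR_def
proof (elim exE conjE)
  fix a b assume a: "\<forall>m. smooth (a m)" "\<forall>x xi. S x xi = (\<Sum>m\<in>{m. mdeg m = k}. a m x * mono m xi)"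
    and b: "\<forall>m. smooth (b m)" "\<forall>x xi. T x xi = (\<Sum>m\<in>{m. mdeg m = k}. b m x * mono m xi)"
  show "\<exists>c. (\<forall>m. smooth (c m)) \<and> (\<forall>x xi. S x xi + T x xi = (\<Sum>m\<in>{m. mdeg m = k}. c m x * mono m xi))"
    using a b by (intro exI[of _ "\<lambda>m x. a m x + b m x"]) (auto simp: smooth_add sum.distrib algebra_simps)
qed

lemma inR_add': "inR k S \<Longrightarrow> inR k T \<Longrightarrow> inR k (S + T)"
  using inR_add[of k S T] by (simp add: plus_fun_def)

lemma inR_cmult: "inR k S \<Longrightarrow> inR k (\<lambda>x xi. c * S x xi)"
  unfolding inR_def
proof (elim exE conjE)
  fix a assume a: "\<forall>m. smooth (a m)" "\<forall>x xi. S x xi = (\<Sum>m\<in>{m. mdeg m = k}. a m x * mono m xi)"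
  show "\<exists>b. (\<forall>m. smooth (b m)) \<and> (\<forall>x xi. c * S x xi = (\<Sum>m\<in>{m. mdeg m = k}. b m x * mono m xi))"
    using a by (intro exI[of _ "\<lambda>m x. c * a m x"]) (auto simp: smooth_cmult sum_distrib_left algebra_simps)
qed

lemma inR_diff: "inR k S \<Longrightarrow> inR k T \<Longrightarrow> inR k (\<lambda>x xi. S x xi - T x xi)"
  using inR_add[of k S "\<lambda>x xi. (-1) * T x xi"] inR_cmult[of k T "-1"] by simp

lemma inR_sum: "finite I \<Longrightarrow> (\<And>i. i \<in> I \<Longrightarrow> inR k (F i)) \<Longrightarrow> inR k (\<lambda>x xi. \<Sum>i\<in>I. F i x xi)"
  by (induct I rule: finite_induct) (auto intro!: inR_add inR_zero)

lemma sum_fun_app: "(\<Sum>i\<in>I. F i) x = (\<Sum>i\<in>I. F i x)"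
  by (induct I rule: infinite_finite_induct) auto

lemma sum_sym_app: "(\<Sum>i\<in>I. F i) x xi = (\<Sum>i\<in>I. F i x xi)"
  by (simp add: sum_fun_app)

lemma inR_sum': "finite I \<Longrightarrow> (\<And>i. i \<in> I \<Longrightarrow> inR k (F i)) \<Longrightarrow> inR k (\<Sum>i\<in>I. F i)"
proof -
  have "sum F I = (\<lambda>x xi. \<Sum>i\<in>I. F i x xi)" by (simp add: fun_eq_iff sum_sym_app)
  then show "finite I \<Longrightarrow> (\<And>i. i \<in> I \<Longrightarrow> inR k (F i)) \<Longrightarrow> inR k (\<Sum>i\<in>I. F i)"
    using inR_sum[of I k F] by simp
qed

lemma inR_mono: "smooth a \<Longrightarrow> mdeg m = k \<Longrightarrow> inR k (\<lambda>x xi. a x * mono m xi)"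
  unfolding inR_def
proof (intro exI[of _ "\<lambda>m' x. if m' = m then a x else 0"] conjI allI)
  fix m' show "smooth (\<lambda>x. if m' = m then a x else 0)" if "smooth a" using that smooth_zero by (cases "m' = m") auto
next
  fix x xi assume "mdeg m = k"
  then show "a x * mono m xi = (\<Sum>m'\<in>{m. mdeg m = k}. (if m' = m then a x else 0) * mono m' xi)"
  proof -
    have e: "(\<lambda>m'. (if m' = m then a x else 0) * mono m' xi) = (\<lambda>m'. if m' = m then a x * mono m xi else 0)"
      by auto
    show ?thesis unfolding e using finite_Mset[of k] \<open>mdeg m = k\<close> by (subst sum.delta) auto
  qed
qed


type_synonym 'n midx = "('n \<Rightarrow> nat) \<times> ('n \<Rightarrow> nat) \<times> nat"

lemma mdeg_alt: "mdeg m = sum (fst m) UNIV + sum (fst (snd m)) UNIV + snd (snd m)"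
  by (cases m) (auto simp: mdeg_def)

lemma mono_alt: "mono m xi = (\<Prod>i\<in>UNIV. qc xi i ^ fst m i) * (\<Prod>i\<in>UNIV. pc xi i ^ fst (snd m) i) * tc xi ^ snd (snd m)"
  by (cases m) (auto simp: mono_def)

lemma prod_pow_split:
  fixes g :: "'n::finite \<Rightarrow> real"
  shows "(\<Prod>j\<in>UNIV. g j ^ e j) = g i ^ e i * (\<Prod>j\<in>UNIV. g j ^ (e(i:=0)) j)"
proof -
  have "(\<Prod>j\<in>UNIV. g j ^ e j) = g i ^ e i * (\<Prod>j\<in>UNIV-{i}. g j ^ e j)"
    by (rule prod.remove) auto
  moreover have "(\<Prod>j\<in>UNIV. g j ^ (e(i:=0)) j) = g i ^ 0 * (\<Prod>j\<in>UNIV-{i}. g j ^ (e(i:=0)) j)"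
    by (subst prod.remove[of _ i]) auto
  moreover have "(\<Prod>j\<in>UNIV-{i}. g j ^ (e(i:=0)) j) = (\<Prod>j\<in>UNIV-{i}. g j ^ e j)"
    by (rule prod.cong) auto
  ultimately show ?thesis by simp
qed

lemma sum_upd_split:
  fixes e :: "'n::finite \<Rightarrow> nat"
  shows "sum (e(i:=v)) UNIV = v + sum e (UNIV - {i})" "sum e UNIV = e i + sum e (UNIV - {i})"
proof -
  show "sum (e(i:=v)) UNIV = v + sum e (UNIV - {i})"
    by (subst sum.remove[of _ i]) (auto intro!: sum.cong)
  show "sum e UNIV = e i + sum e (UNIV - {i})"
    by (subst sum.remove[of _ i]) auto
qed

lemma prod_cong_upd:
  fixes g :: "'n::finite \<Rightarrow> real"
  assumes "\<And>j. j \<noteq> i \<Longrightarrow> g j = f j"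
  shows "(\<Prod>j\<in>UNIV. g j ^ (e(i:=0)) j) = (\<Prod>j\<in>UNIV. f j ^ (e(i:=0)) j)"
  using assms by (intro prod.cong) auto

definition zq :: "'n \<Rightarrow> 'n midx \<Rightarrow> 'n midx" where "zq i m = ((fst m)(i:=0), snd m)"
definition lq :: "'n \<Rightarrow> 'n midx \<Rightarrow> 'n midx" where "lq i m = ((fst m)(i:=fst m i - 1), snd m)"
definition rq :: "'n \<Rightarrow> 'n midx \<Rightarrow> 'n midx" where "rq i m = ((fst m)(i:=fst m i + 1), snd m)"

lemma mono_split_q: "mono m xi = qc xi i ^ fst m i * mono (zq i m) xi"
  unfolding mono_alt zq_def by (simp add: prod_pow_split[of "qc xi" "fst m" i])

lemma mono_shift_q: "mono m (xi + h *\<^sub>R eq i) = (qc xi i + h) ^ fst m i * mono (zq i m) xi"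
proof -
  have "(\<Prod>j\<in>UNIV. qc (xi + h *\<^sub>R eq i) j ^ fst m j)
      = (qc xi i + h) ^ fst m i * (\<Prod>j\<in>UNIV. qc xi j ^ ((fst m)(i:=0)) j)"
  proof -
    have A: "(\<Prod>j\<in>UNIV. qc (xi + h *\<^sub>R eq i) j ^ fst m j) = qc (xi + h *\<^sub>R eq i) i ^ fst m i * (\<Prod>j\<in>UNIV. qc (xi + h *\<^sub>R eq i) j ^ ((fst m)(i:=0)) j)"
      by (rule prod_pow_split)
    have B: "(\<Prod>j\<in>UNIV. qc (xi + h *\<^sub>R eq i) j ^ ((fst m)(i:=0)) j) = (\<Prod>j\<in>UNIV. qc xi j ^ ((fst m)(i:=0)) j)"
      by (rule prod_cong_upd) simp
    have C: "qc (xi + h *\<^sub>R eq i) i = qc xi i + h" by simp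
    show ?thesis by (simp only: A B C)
  qed
  then show ?thesis unfolding mono_alt zq_def by simp
qed

lemma dd_mono_q0: "dd (eq i) (mono m) xi = real (fst m i) * qc xi i ^ (fst m i - 1) * mono (zq i m) xi"
proof -
  have "((\<lambda>h. (qc xi i + h) ^ fst m i * mono (zq i m) xi) has_field_derivative
        real (fst m i) * (qc xi i + 0) ^ (fst m i - 1) * 1 * mono (zq i m) xi) (at 0)"
    by (auto intro!: derivative_eq_intros)
  then show ?thesis unfolding dd_def mono_shift_q by (simp add: DERIV_imp_deriv)
qed

lemma dd_mono_q: "dd (eq i) (mono m) xi = real (fst m i) * mono (lq i m) xi"
proof (cases "fst m i = 0")
  case True then show ?thesis by (simp add: dd_mono_q0)
next
  case False
  have "zq i (lq i m) = zq i m" by (simp add: zq_def lq_def)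
  then have "mono (lq i m) xi = qc xi i ^ (fst m i - 1) * mono (zq i m) xi"
    using mono_split_q[of "lq i m" xi i] by (simp add: lq_def)
  then show ?thesis by (simp add: dd_mono_q0)
qed

lemma euler_q: "qc xi i * dd (eq i) (mono m) xi = real (fst m i) * mono m xi"
proof (cases "fst m i = 0")
  case True then show ?thesis by (simp add: dd_mono_q0)
next
  case False
  then have "qc xi i * qc xi i ^ (fst m i - 1) = qc xi i ^ fst m i"
    by (cases "fst m i") auto
  then show ?thesis unfolding dd_mono_q0 mono_split_q[of m xi i]
    by (metis (no_types, lifting) mult.assoc mult.left_commute)
qed

lemma mdeg_lq: "fst m i \<noteq> 0 \<Longrightarrow> mdeg (lq i m) = mdeg m - 1"
  unfolding mdeg_alt lq_def fst_conv snd_conv using sum_upd_split(1)[of "fst m" i "fst m i - 1"] sum_upd_split(2)[of "fst m" i] by linarith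

lemma mono_rq: "mono (rq i m) xi = qc xi i * mono m xi"
proof -
  have "zq i (rq i m) = zq i m" by (simp add: zq_def rq_def)
  then show ?thesis using mono_split_q[of "rq i m" xi i] mono_split_q[of m xi i]
    by (simp add: rq_def)
qed

lemma mdeg_rq: "mdeg (rq i m) = mdeg m + 1"
  unfolding mdeg_alt rq_def fst_conv snd_conv using sum_upd_split(1)[of "fst m" i "fst m i + 1"] sum_upd_split(2)[of "fst m" i] by linarith

definition zp :: "'n \<Rightarrow> 'n midx \<Rightarrow> 'n midx" where "zp i m = (fst m, (fst (snd m))(i:=0), snd (snd m))"
definition lp :: "'n \<Rightarrow> 'n midx \<Rightarrow> 'n midx" where "lp i m = (fst m, (fst (snd m))(i:=fst (snd m) i - 1), snd (snd m))"
definition rp :: "'n \<Rightarrow> 'n midx \<Rightarrow> 'n midx" where "rp i m = (fst m, (fst (snd m))(i:=fst (snd m) i + 1), snd (snd m))"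

lemma mono_split_p: "mono m xi = pc xi i ^ fst (snd m) i * mono (zp i m) xi"
  unfolding mono_alt zp_def by (simp add: prod_pow_split[of "pc xi" "fst (snd m)" i])

lemma mono_shift_p: "mono m (xi + h *\<^sub>R ep i) = (pc xi i + h) ^ fst (snd m) i * mono (zp i m) xi"
proof -
  have "(\<Prod>j\<in>UNIV. pc (xi + h *\<^sub>R ep i) j ^ fst (snd m) j)
      = (pc xi i + h) ^ fst (snd m) i * (\<Prod>j\<in>UNIV. pc xi j ^ ((fst (snd m))(i:=0)) j)"
  proof -
    have A: "(\<Prod>j\<in>UNIV. pc (xi + h *\<^sub>R ep i) j ^ fst (snd m) j) = pc (xi + h *\<^sub>R ep i) i ^ fst (snd m) i * (\<Prod>j\<in>UNIV. pc (xi + h *\<^sub>R ep i) j ^ ((fst (snd m))(i:=0)) j)"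
      by (rule prod_pow_split)
    have B: "(\<Prod>j\<in>UNIV. pc (xi + h *\<^sub>R ep i) j ^ ((fst (snd m))(i:=0)) j) = (\<Prod>j\<in>UNIV. pc xi j ^ ((fst (snd m))(i:=0)) j)"
      by (rule prod_cong_upd) simp
    have C: "pc (xi + h *\<^sub>R ep i) i = pc xi i + h" by simp
    show ?thesis by (simp only: A B C)
  qed
  then show ?thesis unfolding mono_alt zp_def by simp
qed

lemma dd_mono_p0: "dd (ep i) (mono m) xi = real (fst (snd m) i) * pc xi i ^ (fst (snd m) i - 1) * mono (zp i m) xi"
proof -
  have "((\<lambda>h. (pc xi i + h) ^ fst (snd m) i * mono (zp i m) xi) has_field_derivative
        real (fst (snd m) i) * (pc xi i + 0) ^ (fst (snd m) i - 1) * 1 * mono (zp i m) xi) (at 0)"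
    by (auto intro!: derivative_eq_intros)
  then show ?thesis unfolding dd_def mono_shift_p by (simp add: DERIV_imp_deriv)
qed

lemma dd_mono_p: "dd (ep i) (mono m) xi = real (fst (snd m) i) * mono (lp i m) xi"
proof (cases "fst (snd m) i = 0")
  case True then show ?thesis by (simp add: dd_mono_p0)
next
  case False
  have "zp i (lp i m) = zp i m" by (simp add: zp_def lp_def)
  then have "mono (lp i m) xi = pc xi i ^ (fst (snd m) i - 1) * mono (zp i m) xi"
    using mono_split_p[of "lp i m" xi i] by (simp add: lp_def)
  then show ?thesis by (simp add: dd_mono_p0)
qed

lemma euler_p: "pc xi i * dd (ep i) (mono m) xi = real (fst (snd m) i) * mono m xi"
proof (cases "fst (snd m) i = 0")
  case True then show ?thesis by (simp add: dd_mono_p0)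
next
  case False
  then have "pc xi i * pc xi i ^ (fst (snd m) i - 1) = pc xi i ^ fst (snd m) i"
    by (cases "fst (snd m) i") auto
  then show ?thesis unfolding dd_mono_p0 mono_split_p[of m xi i]
    by (metis (no_types, lifting) mult.assoc mult.left_commute)
qed

lemma mdeg_lp: "fst (snd m) i \<noteq> 0 \<Longrightarrow> mdeg (lp i m) = mdeg m - 1"
  unfolding mdeg_alt lp_def fst_conv snd_conv using sum_upd_split(1)[of "fst (snd m)" i "fst (snd m) i - 1"] sum_upd_split(2)[of "fst (snd m)" i] by linarith

lemma mono_rp: "mono (rp i m) xi = pc xi i * mono m xi"
proof -
  have "zp i (rp i m) = zp i m" by (simp add: zp_def rp_def)
  then show ?thesis using mono_split_p[of "rp i m" xi i] mono_split_p[of m xi i]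
    by (simp add: rp_def)
qed

lemma mdeg_rp: "mdeg (rp i m) = mdeg m + 1"
  unfolding mdeg_alt rp_def fst_conv snd_conv using sum_upd_split(1)[of "fst (snd m)" i "fst (snd m) i + 1"] sum_upd_split(2)[of "fst (snd m)" i] by linarith

definition zt :: "'n midx \<Rightarrow> 'n midx" where "zt m = (fst m, fst (snd m), 0)"
definition lt :: "'n midx \<Rightarrow> 'n midx" where "lt m = (fst m, fst (snd m), snd (snd m) - 1)"
definition rt :: "'n midx \<Rightarrow> 'n midx" where "rt m = (fst m, fst (snd m), snd (snd m) + 1)"

lemma mono_split_t: "mono m xi = tc xi ^ snd (snd m) * mono (zt m) xi"
  unfolding mono_alt zt_def by simp

lemma mono_shift_t: "mono m (xi + h *\<^sub>R et) = (tc xi + h) ^ snd (snd m) * mono (zt m) xi"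
  unfolding mono_alt zt_def by simp

lemma dd_mono_t0: "dd et (mono m) xi = real (snd (snd m)) * tc xi ^ (snd (snd m) - 1) * mono (zt m) xi"
proof -
  have "((\<lambda>h. (tc xi + h) ^ snd (snd m) * mono (zt m) xi) has_field_derivative
        real (snd (snd m)) * (tc xi + 0) ^ (snd (snd m) - 1) * 1 * mono (zt m) xi) (at 0)"
    by (auto intro!: derivative_eq_intros)
  then show ?thesis unfolding dd_def mono_shift_t by (simp add: DERIV_imp_deriv)
qed

lemma dd_mono_t: "dd et (mono m) xi = real (snd (snd m)) * mono (lt m) xi"
proof (cases "snd (snd m) = 0")
  case True then show ?thesis by (simp add: dd_mono_t0)
next
  case False
  have "zt (lt m) = zt m" by (simp add: zt_def lt_def)
  then have "mono (lt m) xi = tc xi ^ (snd (snd m) - 1) * mono (zt m) xi"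
    using mono_split_t[of "lt m" xi] by (simp add: lt_def)
  then show ?thesis by (simp add: dd_mono_t0)
qed

lemma euler_t: "tc xi * dd et (mono m) xi = real (snd (snd m)) * mono m xi"
proof (cases "snd (snd m) = 0")
  case True then show ?thesis by (simp add: dd_mono_t0)
next
  case False
  then have "tc xi * tc xi ^ (snd (snd m) - 1) = tc xi ^ snd (snd m)"
    by (cases "snd (snd m)") auto
  then show ?thesis unfolding dd_mono_t0 mono_split_t[of m xi]
    by (metis (no_types, lifting) mult.assoc mult.left_commute)
qed

lemma mdeg_lt: "snd (snd m) \<noteq> 0 \<Longrightarrow> mdeg (lt m) = mdeg m - 1"
  unfolding mdeg_alt lt_def by simp

lemma mono_rt: "mono (rt m) xi = tc xi * mono m xi"
  unfolding mono_alt rt_def by simp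

lemma mdeg_rt: "mdeg (rt m) = mdeg m + 1"
  unfolding mdeg_alt rt_def by simp

lemma mono_0: "mdeg m = 0 \<Longrightarrow> mono m xi = 1"
  unfolding mdeg_alt mono_alt by simp


lemma inR_E:
  assumes "inR k S"
  obtains a where "\<And>m. smooth (a m)" "S = (\<lambda>x xi. \<Sum>m\<in>{m. mdeg m = k}. a m x * mono m xi)"
  using assms unfolding inR_def by (auto simp: fun_eq_iff)

lemma pdx_sum:
  assumes "finite M" "\<And>m. m \<in> M \<Longrightarrow> smooth (a m)"
  shows "pdx v (\<lambda>x xi. \<Sum>m\<in>M. a m x * g m xi) x xi = (\<Sum>m\<in>M. dd v (a m) x * g m xi)"
proof -
  have "pdx v (\<lambda>x xi. \<Sum>m\<in>M. a m x * g m xi) x xi = (\<Sum>m\<in>M. dd v (\<lambda>y. a m y * g m xi) x)"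
    unfolding pdx_def using assms
    by (intro dd_sum) (auto intro!: differentiable_mult smooth_differentiable)
  also have "\<dots> = (\<Sum>m\<in>M. dd v (a m) x * g m xi)"
    using assms by (intro sum.cong refl) (simp add: dd_mult smooth_differentiable dd_const)
  finally show ?thesis .
qed

lemma pdxi_sum:
  assumes "finite M" "\<And>m xi. m \<in> M \<Longrightarrow> g m differentiable (at xi)"
  shows "pdxi w (\<lambda>x xi. \<Sum>m\<in>M. a m x * g m xi) x xi = (\<Sum>m\<in>M. a m x * dd w (g m) xi)"
proof -
  have "pdxi w (\<lambda>x xi. \<Sum>m\<in>M. a m x * g m xi) x xi = (\<Sum>m\<in>M. dd w (\<lambda>eta. a m x * g m eta) xi)"
    unfolding pdxi_def using assms
    by (intro dd_sum) (auto intro!: differentiable_mult)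
  also have "\<dots> = (\<Sum>m\<in>M. a m x * dd w (g m) xi)"
    using assms by (intro sum.cong refl) (simp add: dd_cmult)
  finally show ?thesis .
qed

lemma R_xi_diff:
  assumes "inR k S" shows "(\<lambda>eta. S x eta) differentiable (at xi)"
proof -
  obtain a where a: "\<And>m. smooth (a m)" "S = (\<lambda>x xi. \<Sum>m\<in>{m. mdeg m = k}. a m x * mono m xi)"
    using inR_E[OF assms] by blast
  show ?thesis unfolding a(2)
    by (intro differentiable_sum ballI differentiable_mult differentiable_const mono_differentiable finite_Mset)
qed

lemma R_x_diff:
  assumes "inR k S" shows "(\<lambda>y. S y xi) differentiable (at x)"
proof -
  obtain a where a: "\<And>m. smooth (a m)" "S = (\<lambda>x xi. \<Sum>m\<in>{m. mdeg m = k}. a m x * mono m xi)"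
    using inR_E[OF assms] by blast
  show ?thesis unfolding a(2)
    by (intro differentiable_sum ballI differentiable_mult differentiable_const smooth_differentiable a(1) finite_Mset)
qed

lemma inR_pdx:
  assumes "inR k S" shows "inR k (pdx v S)"
proof -
  obtain a where a: "\<And>m. smooth (a m)" "S = (\<lambda>x xi. \<Sum>m\<in>{m. mdeg m = k}. a m x * mono m xi)"
    using inR_E[OF assms] by blast
  show ?thesis unfolding inR_def
    by (intro exI[of _ "\<lambda>m. dd v (a m)"] conjI allI)
      (auto simp: a(2) pdx_sum finite_Mset a(1) smooth_dd)
qed

lemma inR_pdxi_gen:
  fixes S :: "'n::finite sym" and e :: "'n midx \<Rightarrow> nat" and l :: "'n midx \<Rightarrow> 'n midx"
  assumes "inR k S"
    and d: "\<And>m xi. dd w (mono m) xi = real (e m) * mono (l m) xi"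
    and deg: "\<And>m. e m \<noteq> 0 \<Longrightarrow> mdeg (l m) = mdeg m - 1"
  shows "inR (k - 1) (pdxi w S)"
proof -
  obtain a where a: "\<And>m. smooth (a m)" "S = (\<lambda>x xi. \<Sum>m\<in>{m. mdeg m = k}. a m x * mono m xi)"
    using inR_E[OF assms(1)] by blast
  have P: "pdxi w S x xi = (\<Sum>m\<in>{m. mdeg m = k}. a m x * dd w (mono m) xi)" for x xi
    unfolding a(2) by (rule pdxi_sum[OF finite_Mset mono_differentiable])
  have e: "pdxi w S = (\<lambda>x xi. \<Sum>m\<in>{m. mdeg m = k}. (\<lambda>x xi. (real (e m) * a m x) * mono (l m) xi) x xi)"
    unfolding P by (intro ext) (simp add: d algebra_simps)
  have "inR (k - 1) (\<lambda>x xi. \<Sum>m\<in>{m. mdeg m = k}. (\<lambda>x xi. (real (e m) * a m x) * mono (l m) xi) x xi)"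
  proof (intro inR_sum finite_Mset)
    fix m :: "'n midx" assume m: "m \<in> {m. mdeg m = k}"
    show "inR (k - 1) (\<lambda>x xi. real (e m) * a m x * mono (l m) xi)"
    proof (cases "e m = 0")
      case True then show ?thesis using inR_zero by simp
    next
      case False then show ?thesis using m deg
        by (intro inR_mono smooth_cmult a(1)) auto
    qed
  qed
  then show ?thesis using e by simp
qed

lemma inR_pdxi_q: "inR k S \<Longrightarrow> inR (k - 1) (pdxi (eq i) S)"
  by (rule inR_pdxi_gen[of _ _ _ "\<lambda>m. fst m i" "lq i"]) (auto simp: dd_mono_q mdeg_lq)
lemma inR_pdxi_p: "inR k S \<Longrightarrow> inR (k - 1) (pdxi (ep i) S)"
  by (rule inR_pdxi_gen[of _ _ _ "\<lambda>m. fst (snd m) i" "lp i"]) (auto simp: dd_mono_p mdeg_lp)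
lemma inR_pdxi_t: "inR k S \<Longrightarrow> inR (k - 1) (pdxi et S)"
  by (rule inR_pdxi_gen[of _ _ _ "\<lambda>m. snd (snd m)" "lt"]) (auto simp: dd_mono_t mdeg_lt)

lemma inR_mul_lin:
  assumes "bounded_linear l" "inR k S" shows "inR k (\<lambda>x xi. l x * S x xi)"
proof -
  obtain a where a: "\<And>m. smooth (a m)" "S = (\<lambda>x xi. \<Sum>m\<in>{m. mdeg m = k}. a m x * mono m xi)"
    using inR_E[OF assms(2)] by blast
  show ?thesis unfolding inR_def
    by (intro exI[of _ "\<lambda>m y. l y * a m y"] conjI allI)
      (auto simp: a(2) sum_distrib_left algebra_simps intro: smooth_lin_mult[OF assms(1) a(1)])
qed

lemma inR_mul_gen:
  assumes "inR k S"
    and r: "\<And>m xi. mono (r m) xi = g xi * mono m xi"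
    and deg: "\<And>m. mdeg (r m) = mdeg m + 1"
  shows "inR (k + 1) (\<lambda>x xi. g xi * S x xi)"
proof -
  obtain a where a: "\<And>m. smooth (a m)" "S = (\<lambda>x xi. \<Sum>m\<in>{m. mdeg m = k}. a m x * mono m xi)"
    using inR_E[OF assms(1)] by blast
  have e: "(\<lambda>x xi. g xi * S x xi) = (\<lambda>x xi. \<Sum>m\<in>{m. mdeg m = k}. (\<lambda>x xi. a m x * mono (r m) xi) x xi)"
    unfolding a(2) by (intro ext) (simp add: r sum_distrib_left algebra_simps)
  have "inR (k + 1) (\<lambda>x xi. \<Sum>m\<in>{m. mdeg m = k}. (\<lambda>x xi. a m x * mono (r m) xi) x xi)"
    by (intro inR_sum finite_Mset inR_mono a(1)) (auto simp: deg)
  then show ?thesis using e by simp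
qed

lemma inR_mul_q: "inR k S \<Longrightarrow> inR (k + 1) (\<lambda>x xi. qc xi i * S x xi)"
  by (rule inR_mul_gen[of _ _ "rq i"]) (auto simp: mono_rq mdeg_rq)
lemma inR_mul_p: "inR k S \<Longrightarrow> inR (k + 1) (\<lambda>x xi. pc xi i * S x xi)"
  by (rule inR_mul_gen[of _ _ "rp i"]) (auto simp: mono_rp mdeg_rp)
lemma inR_mul_t: "inR k S \<Longrightarrow> inR (k + 1) (\<lambda>x xi. tc xi * S x xi)"
  by (rule inR_mul_gen[of _ _ "rt"]) (auto simp: mono_rt mdeg_rt)

lemma pdxi_pdx_comm:
  assumes "inR k S" shows "pdxi w (pdx v S) x xi = pdx v (pdxi w S) x xi"
proof -
  obtain a where a: "\<And>m. smooth (a m)" "S = (\<lambda>x xi. \<Sum>m\<in>{m. mdeg m = k}. a m x * mono m xi)"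
    using inR_E[OF assms] by blast
  have 1: "pdx v S = (\<lambda>x xi. \<Sum>m\<in>{m. mdeg m = k}. dd v (a m) x * mono m xi)"
    unfolding a(2) by (intro ext) (simp add: pdx_sum finite_Mset a(1))
  have 2: "pdxi w S = (\<lambda>x xi. \<Sum>m\<in>{m. mdeg m = k}. a m x * dd w (mono m) xi)"
    unfolding a(2) by (intro ext) (simp add: pdxi_sum finite_Mset mono_differentiable)
  show ?thesis unfolding 1 2
    by (simp add: pdx_sum pdxi_sum finite_Mset mono_differentiable a(1))
qed

lemma pdxi_R0:
  fixes S :: "'n::finite sym"
  assumes "inR 0 S" shows "pdxi w S x xi = 0"
proof -
  obtain a where a: "\<And>m. smooth (a m)" "S = (\<lambda>x xi. \<Sum>m\<in>{m. mdeg m = 0}. a m x * mono m xi)"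
    using inR_E[OF assms] by blast
  have "\<And>m. m \<in> {m. mdeg m = 0} \<Longrightarrow> dd w (mono m) xi = 0"
  proof -
    fix m :: "'n midx" assume "m \<in> {m. mdeg m = (0::nat)}"
    then have "mdeg m = 0" by simp
    then have "mono m = (\<lambda>_. 1)" by (simp add: fun_eq_iff mono_0)
    then show "dd w (mono m) xi = 0" by (simp add: dd_const)
  qed
  then show ?thesis unfolding a(2)
    by (simp add: pdxi_sum finite_Mset mono_differentiable)
qed

lemma euler_q': "qc xi i * (c * dd (eq i) (mono m) xi) = c * real (fst m i) * mono m xi"
  using euler_q[of xi i m] by (metis mult.left_commute mult.assoc)
lemma euler_p': "pc xi i * (c * dd (ep i) (mono m) xi) = c * real (fst (snd m) i) * mono m xi"
  using euler_p[of xi i m] by (metis mult.left_commute mult.assoc)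
lemma euler_t': "tc xi * (c * dd et (mono m) xi) = c * real (snd (snd m)) * mono m xi"
  using euler_t[of xi m] by (metis mult.left_commute mult.assoc)

lemma euler:
  assumes "inR k S"
  shows "(\<Sum>i\<in>UNIV. qc xi i * pdxi (eq i) S x xi + pc xi i * pdxi (ep i) S x xi) + tc xi * pdxi et S x xi
    = real k * S x xi"
proof -
  obtain a where a: "\<And>m. smooth (a m)" "S = (\<lambda>x xi. \<Sum>m\<in>{m. mdeg m = k}. a m x * mono m xi)"
    using inR_E[OF assms] by blast
  let ?M = "{m. mdeg m = k}"
  have P: "\<And>w. pdxi w S x xi = (\<Sum>m\<in>?M. a m x * dd w (mono m) xi)"
    unfolding a(2) by (simp add: pdxi_sum finite_Mset mono_differentiable)
  have "(\<Sum>i\<in>UNIV. qc xi i * pdxi (eq i) S x xi + pc xi i * pdxi (ep i) S x xi)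
     = (\<Sum>i\<in>UNIV. \<Sum>m\<in>?M. a m x * real (fst m i) * mono m xi + a m x * real (fst (snd m) i) * mono m xi)"
    unfolding P by (simp add: sum_distrib_left euler_q' euler_p' sum.distrib)
  also have "\<dots> = (\<Sum>m\<in>?M. \<Sum>i\<in>UNIV. a m x * real (fst m i) * mono m xi + a m x * real (fst (snd m) i) * mono m xi)"
    by (rule sum.swap)
  also have "\<dots> = (\<Sum>m\<in>?M. a m x * mono m xi * real (sum (fst m) UNIV + sum (fst (snd m)) UNIV))"
    by (intro sum.cong refl) (simp add: sum.distrib sum_distrib_left algebra_simps)
  finally have 1: "(\<Sum>i\<in>UNIV. qc xi i * pdxi (eq i) S x xi + pc xi i * pdxi (ep i) S x xi)
     = (\<Sum>m\<in>?M. a m x * mono m xi * real (sum (fst m) UNIV + sum (fst (snd m)) UNIV))" .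
  have 2: "tc xi * pdxi et S x xi = (\<Sum>m\<in>?M. a m x * mono m xi * real (snd (snd m)))"
    unfolding P by (simp add: sum_distrib_left euler_t' algebra_simps)
  have "(\<Sum>i\<in>UNIV. qc xi i * pdxi (eq i) S x xi + pc xi i * pdxi (ep i) S x xi) + tc xi * pdxi et S x xi
      = (\<Sum>m\<in>?M. a m x * mono m xi * real (mdeg m))"
  proof -
    have eqm: "\<And>m. a m x * mono m xi * real (sum (fst m) UNIV + sum (fst (snd m)) UNIV) + a m x * mono m xi * real (snd (snd m)) = a m x * mono m xi * real (mdeg m)"
      by (simp add: mdeg_alt algebra_simps)
    show ?thesis unfolding 1 2 sum.distrib[where A = "{m. mdeg m = k}", symmetric] eqm ..
  qed
  also have "\<dots> = real k * S x xi"
    unfolding a(2) by (simp add: sum_distrib_left algebra_simps)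
  finally show ?thesis .
qed


lemma diff_qc [simp]: "(\<lambda>y. qc y i) differentiable (at x)" using bl_diff[OF bl_qc] .
lemma diff_pc [simp]: "(\<lambda>y. pc y i) differentiable (at x)" using bl_diff[OF bl_pc] .
lemma diff_tc [simp]: "tc differentiable (at x)" using bl_diff[OF bl_tc] .
lemma diff_tc' [simp]: "(\<lambda>y. tc y) differentiable (at x)" using bl_diff[OF bl_tc] by simp
lemma dd_qc [simp]: "dd v (\<lambda>y. qc y i) x = qc v i" using dd_linear[OF bl_qc] .
lemma dd_pc [simp]: "dd v (\<lambda>y. pc y i) x = pc v i" using dd_linear[OF bl_pc] .
lemma dd_tc [simp]: "dd v tc x = tc v" using dd_linear[OF bl_tc] .
lemma dd_tc' [simp]: "dd v (\<lambda>y. tc y) x = tc v" using dd_linear[OF bl_tc] by simp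

lemma dd_const' [simp]: "dd v (\<lambda>y. c) x = 0" by (rule dd_const)

lemma diff_divc [simp]:
  fixes f :: "'a::real_normed_vector \<Rightarrow> real"
  shows "f differentiable (at x) \<Longrightarrow> (\<lambda>y. f y / c) differentiable (at x)"
  using differentiable_mult[of f x UNIV "\<lambda>_. 1/c"] by simp

lemma dd_divc:
  fixes f :: "'a::real_normed_vector \<Rightarrow> real"
  shows "f differentiable (at x) \<Longrightarrow> dd v (\<lambda>y. f y / c) x = dd v f x / c"
  using dd_cmult[of f x v "1/c"] by simp

lemma pdxi_Xop:
  fixes S :: "'n::finite sym"
  assumes S: "inR k S"
  shows "pdxi w (Xop \<delta> k' S) x xi =
     (\<Sum>j\<in>UNIV. qc w j * pdx (ep j) S x xi + qc xi j * pdxi w (pdx (ep j) S) x xi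
                - (pc w j * pdx (eq j) S x xi + pc xi j * pdxi w (pdx (eq j) S) x xi))
   + (tc w * Es S x xi + tc xi * pdxi w (Es S) x xi)
   - (Es_xi x w * pdx et S x xi + Es_xi x xi * pdxi w (pdx et S) x xi)
   + (2 * (real CARD('n) + 1) * \<delta> + real k') * (tc w * S x xi + tc xi * pdxi w S x xi)"
proof -
  have d1: "\<And>v x xi. (\<lambda>eta. pdx v S x eta) differentiable (at xi)"
    using R_xi_diff[OF inR_pdx[OF S]] .
  have d2: "\<And>x xi. (\<lambda>eta. S x eta) differentiable (at xi)"
    using R_xi_diff[OF S] .
  have d3: "\<And>x xi. (\<lambda>eta. Es S x eta) differentiable (at xi)"
    unfolding Es_def using d1 by simp
  show ?thesis
    unfolding pdxi_def Xop_def Dop_def Es_xi_def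
    using d1 d2 d3
    by (simp add: dd_add dd_diff dd_mult dd_sum algebra_simps sum.distrib sum_subtractf)
qed

lemma pdxi_Es:
  fixes S :: "'n::finite sym"
  assumes S: "inR k S"
  shows "pdxi w (Es S) x xi = (\<Sum>j\<in>UNIV. pc x j * pdxi w (pdx (ep j) S) x xi + qc x j * pdxi w (pdx (eq j) S) x xi)"
proof -
  have d1: "\<And>v x xi. (\<lambda>eta. pdx v S x eta) differentiable (at xi)"
    using R_xi_diff[OF inR_pdx[OF S]] .
  show ?thesis
    unfolding pdxi_def Es_def using d1
    by (simp add: dd_add dd_diff dd_mult dd_sum algebra_simps sum.distrib sum_subtractf)
qed

lemma pdx_ialpha:
  fixes S :: "'n::finite sym"
  assumes S: "inR k S"
  shows "pdx v (ialpha S) x xi = 1/2 * ((\<Sum>i\<in>UNIV. pc v i * pdxi (eq i) S x xi + pc x i * pdxi (eq i) (pdx v S) x xi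
        - (qc v i * pdxi (ep i) S x xi + qc x i * pdxi (ep i) (pdx v S) x xi)) - pdxi et (pdx v S) x xi)"
proof -
  have d1: "\<And>i x xi. (\<lambda>y. pdxi (eq i) S y xi) differentiable (at x)"
    using R_x_diff[OF inR_pdxi_q[OF S]] .
  have d2: "\<And>i x xi. (\<lambda>y. pdxi (ep i) S y xi) differentiable (at x)"
    using R_x_diff[OF inR_pdxi_p[OF S]] .
  have d3: "\<And>x xi. (\<lambda>y. pdxi et S y xi) differentiable (at x)"
    using R_x_diff[OF inR_pdxi_t[OF S]] .
  have c: "\<And>w. pdxi w (pdx v S) x xi = pdx v (pdxi w S) x xi"
    using pdxi_pdx_comm[OF S] .
  show ?thesis
    unfolding c unfolding pdx_def ialpha_def using d1 d2 d3
    by (simp add: dd_add dd_diff dd_mult dd_sum dd_cmult dd_divc algebra_simps add_divide_distrib sum.distrib sum_subtractf)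
qed


lemma swap_dsum:
  fixes F :: "'a \<Rightarrow> 'b \<Rightarrow> real"
  shows "(\<Sum>i\<in>UNIV. \<Sum>j\<in>UNIV. F i j) = (\<Sum>j\<in>UNIV. \<Sum>i\<in>UNIV. F i j)"
  by (rule sum.swap)

lemma comm_alg:
  fixes P Q u r A B qS pS qT pT tA tB :: "'n::finite \<Rightarrow> real"
    and qA pA qB pB :: "'n \<Rightarrow> 'n \<Rightarrow> real"
  assumes E: "E = (\<Sum>j\<in>UNIV. P j * A j + Q j * B j)"
    and eul: "(\<Sum>i\<in>UNIV. u i * qS i + r i * pS i) + \<tau> * tS = kk * s"
    and c: "c = 2 * N * \<delta> + kk" "c' = 2 * N * \<delta> + kk'"
    and DQ: "DQ = (\<lambda>i. A i + (\<Sum>j\<in>UNIV. u j * qA i j - r j * qB i j) + \<tau> * (\<Sum>j\<in>UNIV. P j * qA i j + Q j * qB i j)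
                - (Q i * T + Exi * qT i) + c * (\<tau> * qS i))"
    and DP: "DP = (\<lambda>i. - B i + (\<Sum>j\<in>UNIV. u j * pA i j - r j * pB i j) + \<tau> * (\<Sum>j\<in>UNIV. P j * pA i j + Q j * pB i j)
                - (P i * T + Exi * pT i) + c * (\<tau> * pS i))"
    and DT: "DT = (\<Sum>j\<in>UNIV. u j * tA j - r j * tB j) + E + \<tau> * (\<Sum>j\<in>UNIV. P j * tA j + Q j * tB j)
                - Exi * tT + c * (s + \<tau> * tS)"
    and dpU: "dpU = (\<lambda>j. 1/2 * ((qS j + (\<Sum>i\<in>UNIV. P i * qA i j - Q i * pA i j)) - tA j))"
    and dqU: "dqU = (\<lambda>j. 1/2 * (((\<Sum>i\<in>UNIV. P i * qB i j - Q i * pB i j) - pS j) - tB j))"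
    and dtU: "dtU = 1/2 * ((\<Sum>i\<in>UNIV. P i * qT i - Q i * pT i) - tT)"
    and U: "U = 1/2 * ((\<Sum>i\<in>UNIV. P i * qS i - Q i * pS i) - tS)"
  shows "1/2 * ((\<Sum>i\<in>UNIV. P i * DQ i - Q i * DP i) - DT)
       = ((\<Sum>j\<in>UNIV. u j * dpU j - r j * dqU j) + \<tau> * (\<Sum>j\<in>UNIV. P j * dpU j + Q j * dqU j) - Exi * dtU + c' * \<tau> * U)
         + (kk - kk' - 1) * \<tau> * U - (N * \<delta> + kk) * s"
proof -
  define D1 where "D1 = (\<Sum>i\<in>UNIV. \<Sum>j\<in>UNIV. P i * (u j * qA i j - r j * qB i j) + \<tau> * P i * (P j * qA i j + Q j * qB i j)
        - Q i * (u j * pA i j - r j * pB i j) - \<tau> * Q i * (P j * pA i j + Q j * pB i j))"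
  define D2 where "D2 = (\<Sum>j\<in>UNIV. \<Sum>i\<in>UNIV. u j * (P i * qA i j - Q i * pA i j) - r j * (P i * qB i j - Q i * pB i j)
        + \<tau> * (P j * (P i * qA i j - Q i * pA i j) + Q j * (P i * qB i j - Q i * pB i j)))"
  have h3: "D1 = D2" unfolding D1_def D2_def
    by (subst swap_dsum) (intro sum.cong refl, simp add: algebra_simps)
  have h1: "(\<Sum>i\<in>UNIV. P i * DQ i - Q i * DP i) - DT
     = D1 + (\<Sum>i\<in>UNIV. P i * A i + Q i * B i) - E
       - Exi * (\<Sum>i\<in>UNIV. P i * qT i) + Exi * (\<Sum>i\<in>UNIV. Q i * pT i) + Exi * tT
       + c * \<tau> * (\<Sum>i\<in>UNIV. P i * qS i) - c * \<tau> * (\<Sum>i\<in>UNIV. Q i * pS i) - c * s - c * \<tau> * tS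
       - (\<Sum>j\<in>UNIV. u j * tA j) + (\<Sum>j\<in>UNIV. r j * tB j) - \<tau> * (\<Sum>j\<in>UNIV. P j * tA j) - \<tau> * (\<Sum>j\<in>UNIV. Q j * tB j)"
    unfolding DQ DP DT D1_def
    by (simp add: sum_distrib_left sum.distrib sum_subtractf algebra_simps)
  have h2: "(\<Sum>j\<in>UNIV. u j * dpU j - r j * dqU j) + \<tau> * (\<Sum>j\<in>UNIV. P j * dpU j + Q j * dqU j) - Exi * dtU
     = 1/2 * (D2 + (\<Sum>j\<in>UNIV. u j * qS j) + (\<Sum>j\<in>UNIV. r j * pS j) + \<tau> * (\<Sum>j\<in>UNIV. P j * qS j) - \<tau> * (\<Sum>j\<in>UNIV. Q j * pS j)
       - (\<Sum>j\<in>UNIV. u j * tA j) + (\<Sum>j\<in>UNIV. r j * tB j) - \<tau> * (\<Sum>j\<in>UNIV. P j * tA j) - \<tau> * (\<Sum>j\<in>UNIV. Q j * tB j)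
       - Exi * (\<Sum>i\<in>UNIV. P i * qT i) + Exi * (\<Sum>i\<in>UNIV. Q i * pT i) + Exi * tT)"
    unfolding dpU dqU dtU D2_def
    by (simp add: sum_distrib_left sum.distrib sum_subtractf algebra_simps)
  have h4: "(\<Sum>i\<in>UNIV. P i * A i + Q i * B i) = E" using E by simp
  have eul': "(\<Sum>j\<in>UNIV. u j * qS j) + (\<Sum>j\<in>UNIV. r j * pS j) = kk * s - \<tau> * tS"
    using eul by (simp add: sum.distrib)
  have U2: "2 * U = (\<Sum>i\<in>UNIV. P i * qS i) - (\<Sum>i\<in>UNIV. Q i * pS i) - tS"
    unfolding U by (simp add: sum_subtractf)
  have a1: "(\<Sum>i\<in>UNIV. P i * qS i) = 2 * U + (\<Sum>i\<in>UNIV. Q i * pS i) + tS" using U2 by simp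
  have a3: "(\<Sum>j\<in>UNIV. u j * qS j) = kk * s - \<tau> * tS - (\<Sum>j\<in>UNIV. r j * pS j)" using eul' by simp
  show ?thesis
    unfolding h1 h2 h3 h4 a1 a3 c by (simp add: algebra_simps)
qed


lemma if01_mult [simp]:
  "(if P then 1 else 0) * (y::real) = (if P then y else 0)"
  "(y::real) * (if P then 1 else 0) = (if P then y else 0)"
  by auto

lemma Es_xi_simps [simp]:
  "Es_xi x (eq i) = qc x i" "Es_xi x (ep i) = pc x i" "Es_xi x et = 0"
  by (simp_all add: Es_xi_def)

lemma comm:
  fixes S :: "'n::finite sym"
  assumes S: "inR k S"
  shows "ialpha (Xop \<delta> k S) x xi = Xop \<delta> k' (ialpha S) x xi
     + (real k - real k' - 1) * tc xi * ialpha S x xi - ((real CARD('n) + 1) * \<delta> + real k) * S x xi"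
proof -
  let ?N = "real CARD('n) + 1"
  let ?c = "2 * ?N * \<delta> + real k"
  let ?c' = "2 * ?N * \<delta> + real k'"
  have DQ: "(\<lambda>i. pdxi (eq i) (Xop \<delta> k S) x xi) = (\<lambda>i. pdx (ep i) S x xi
      + (\<Sum>j\<in>UNIV. qc xi j * pdxi (eq i) (pdx (ep j) S) x xi - pc xi j * pdxi (eq i) (pdx (eq j) S) x xi)
      + tc xi * (\<Sum>j\<in>UNIV. pc x j * pdxi (eq i) (pdx (ep j) S) x xi + qc x j * pdxi (eq i) (pdx (eq j) S) x xi)
      - (qc x i * pdx et S x xi + Es_xi x xi * pdxi (eq i) (pdx et S) x xi) + ?c * (tc xi * pdxi (eq i) S x xi))"
    by (intro ext) (simp add: pdxi_Xop[OF S] pdxi_Es[OF S] sum.distrib sum_subtractf sum.delta sum.delta')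
  have DP: "(\<lambda>i. pdxi (ep i) (Xop \<delta> k S) x xi) = (\<lambda>i. - pdx (eq i) S x xi
      + (\<Sum>j\<in>UNIV. qc xi j * pdxi (ep i) (pdx (ep j) S) x xi - pc xi j * pdxi (ep i) (pdx (eq j) S) x xi)
      + tc xi * (\<Sum>j\<in>UNIV. pc x j * pdxi (ep i) (pdx (ep j) S) x xi + qc x j * pdxi (ep i) (pdx (eq j) S) x xi)
      - (pc x i * pdx et S x xi + Es_xi x xi * pdxi (ep i) (pdx et S) x xi) + ?c * (tc xi * pdxi (ep i) S x xi))"
    by (intro ext) (simp add: pdxi_Xop[OF S] pdxi_Es[OF S] sum.distrib sum_subtractf sum.delta sum.delta')
  have DT: "pdxi et (Xop \<delta> k S) x xi = 
      (\<Sum>j\<in>UNIV. qc xi j * pdxi et (pdx (ep j) S) x xi - pc xi j * pdxi et (pdx (eq j) S) x xi)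
      + Es S x xi + tc xi * (\<Sum>j\<in>UNIV. pc x j * pdxi et (pdx (ep j) S) x xi + qc x j * pdxi et (pdx (eq j) S) x xi)
      - Es_xi x xi * pdxi et (pdx et S) x xi + ?c * (S x xi + tc xi * pdxi et S x xi)"
    by (simp add: pdxi_Xop[OF S] pdxi_Es[OF S] sum.distrib sum_subtractf)
  have dpU: "(\<lambda>j. pdx (ep j) (ialpha S) x xi) = (\<lambda>j. 1/2 * ((pdxi (eq j) S x xi
      + (\<Sum>i\<in>UNIV. pc x i * pdxi (eq i) (pdx (ep j) S) x xi - qc x i * pdxi (ep i) (pdx (ep j) S) x xi))
      - pdxi et (pdx (ep j) S) x xi))"
    by (intro ext) (simp add: pdx_ialpha[OF S] sum.distrib sum_subtractf sum.delta sum.delta')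
  have dqU: "(\<lambda>j. pdx (eq j) (ialpha S) x xi) = (\<lambda>j. 1/2 * (((\<Sum>i\<in>UNIV. pc x i * pdxi (eq i) (pdx (eq j) S) x xi
      - qc x i * pdxi (ep i) (pdx (eq j) S) x xi) - pdxi (ep j) S x xi) - pdxi et (pdx (eq j) S) x xi))"
    by (intro ext) (simp add: pdx_ialpha[OF S] sum.distrib sum_subtractf sum.delta sum.delta')
  have dtU: "pdx et (ialpha S) x xi = 1/2 * ((\<Sum>i\<in>UNIV. pc x i * pdxi (eq i) (pdx et S) x xi
      - qc x i * pdxi (ep i) (pdx et S) x xi) - pdxi et (pdx et S) x xi)"
    by (simp add: pdx_ialpha[OF S] sum.distrib sum_subtractf)
  have U: "ialpha S x xi = 1/2 * ((\<Sum>i\<in>UNIV. pc x i * pdxi (eq i) S x xi - qc x i * pdxi (ep i) S x xi) - pdxi et S x xi)"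
    by (simp add: ialpha_def)
  have E: "Es S x xi = (\<Sum>j\<in>UNIV. pc x j * pdx (ep j) S x xi + qc x j * pdx (eq j) S x xi)"
    by (simp add: Es_def)
  have eul: "(\<Sum>i\<in>UNIV. qc xi i * pdxi (eq i) S x xi + pc xi i * pdxi (ep i) S x xi) + tc xi * pdxi et S x xi
     = real k * S x xi" by (rule euler[OF S])
  note alg = comm_alg[where P = "\<lambda>i. pc x i" and Q = "\<lambda>i. qc x i" and u = "\<lambda>j. qc xi j" and r = "\<lambda>j. pc xi j"
     and A = "\<lambda>j. pdx (ep j) S x xi" and B = "\<lambda>j. pdx (eq j) S x xi"
     and qS = "\<lambda>i. pdxi (eq i) S x xi" and pS = "\<lambda>i. pdxi (ep i) S x xi"
     and qT = "\<lambda>i. pdxi (eq i) (pdx et S) x xi" and pT = "\<lambda>i. pdxi (ep i) (pdx et S) x xi"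
     and tA = "\<lambda>j. pdxi et (pdx (ep j) S) x xi" and tB = "\<lambda>j. pdxi et (pdx (eq j) S) x xi"
     and qA = "\<lambda>i j. pdxi (eq i) (pdx (ep j) S) x xi" and pA = "\<lambda>i j. pdxi (ep i) (pdx (ep j) S) x xi"
     and qB = "\<lambda>i j. pdxi (eq i) (pdx (eq j) S) x xi" and pB = "\<lambda>i j. pdxi (ep i) (pdx (eq j) S) x xi"
     and E = "Es S x xi" and \<tau> = "tc xi" and s = "S x xi" and tS = "pdxi et S x xi" and T = "pdx et S x xi"
     and tT = "pdxi et (pdx et S) x xi" and Exi = "Es_xi x xi" and kk = "real k" and kk' = "real k'"
     and N = ?N and c = ?c and c' = ?c' and \<delta> = \<delta>
     and DQ = "\<lambda>i. pdxi (eq i) (Xop \<delta> k S) x xi" and DP = "\<lambda>i. pdxi (ep i) (Xop \<delta> k S) x xi"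
     and DT = "pdxi et (Xop \<delta> k S) x xi"
     and dpU = "\<lambda>j. pdx (ep j) (ialpha S) x xi" and dqU = "\<lambda>j. pdx (eq j) (ialpha S) x xi"
     and dtU = "pdx et (ialpha S) x xi" and U = "ialpha S x xi"]
  have main: "1/2 * ((\<Sum>i\<in>UNIV. pc x i * pdxi (eq i) (Xop \<delta> k S) x xi - qc x i * pdxi (ep i) (Xop \<delta> k S) x xi) - pdxi et (Xop \<delta> k S) x xi)
     = ((\<Sum>j\<in>UNIV. qc xi j * pdx (ep j) (ialpha S) x xi - pc xi j * pdx (eq j) (ialpha S) x xi)
        + tc xi * (\<Sum>j\<in>UNIV. pc x j * pdx (ep j) (ialpha S) x xi + qc x j * pdx (eq j) (ialpha S) x xi)
        - Es_xi x xi * pdx et (ialpha S) x xi + ?c' * tc xi * ialpha S x xi)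
       + (real k - real k' - 1) * tc xi * ialpha S x xi - (?N * \<delta> + real k) * S x xi"
    by (rule alg[OF E eul refl refl DQ DP DT dpU dqU dtU U])
  show ?thesis
    unfolding ialpha_def[of "Xop \<delta> k S"] Xop_def[of _ k' "ialpha S"] Dop_def[of "ialpha S"] Es_def[of "ialpha S"]
    using main by (simp add: algebra_simps)
qed


lemma pdx_lin:
  fixes S T :: "'n::finite sym"
  assumes S: "inR k1 S" and T: "inR k2 T"
  shows "pdx v (\<lambda>x xi. S x xi + a * T x xi) x xi = pdx v S x xi + a * pdx v T x xi"
  unfolding pdx_def using R_x_diff[OF S] R_x_diff[OF T]
  by (simp add: dd_add dd_cmult)

lemma pdxi_lin:
  fixes S T :: "'n::finite sym"
  assumes S: "inR k1 S" and T: "inR k2 T"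
  shows "pdxi w (\<lambda>x xi. S x xi + a * T x xi) x xi = pdxi w S x xi + a * pdxi w T x xi"
  unfolding pdxi_def using R_xi_diff[OF S] R_xi_diff[OF T]
  by (simp add: dd_add dd_cmult)

lemma pdx_zero: "pdx v (\<lambda>x xi. 0) x xi = 0" unfolding pdx_def by simp
lemma pdxi_zero: "pdxi v (\<lambda>x xi. 0) x xi = 0" unfolding pdxi_def by simp

lemma Xop_lin:
  fixes S T :: "'n::finite sym"
  assumes S: "inR k1 S" and T: "inR k2 T"
  shows "Xop \<delta> K (\<lambda>x xi. S x xi + a * T x xi) = (\<lambda>x xi. Xop \<delta> K S x xi + a * Xop \<delta> K T x xi)"
  by (intro ext) (simp add: Xop_def Dop_def Es_def pdx_lin[OF S T] algebra_simps sum.distrib sum_distrib_left sum_subtractf)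

lemma ialpha_lin:
  fixes S T :: "'n::finite sym"
  assumes S: "inR k1 S" and T: "inR k2 T"
  shows "ialpha (\<lambda>x xi. S x xi + a * T x xi) = (\<lambda>x xi. ialpha S x xi + a * ialpha T x xi)"
  by (intro ext) (simp add: ialpha_def pdxi_lin[OF S T] algebra_simps sum.distrib sum_distrib_left sum_subtractf)

lemma Xop_zero: "Xop \<delta> K (\<lambda>x xi. 0) = (\<lambda>x xi. 0)"
  by (intro ext) (simp add: Xop_def Dop_def Es_def pdx_zero)

lemma ialpha_zero: "ialpha (\<lambda>x xi. 0) = (\<lambda>x xi. 0)"
  by (intro ext) (simp add: ialpha_def pdxi_zero)

lemma inR_Es: "inR k S \<Longrightarrow> inR k (Es S)"
proof -
  assume S: "inR k S"
  have e: "Es S = (\<lambda>x xi. \<Sum>i\<in>UNIV. pc x i * pdx (ep i) S x xi + qc x i * pdx (eq i) S x xi)"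
    by (intro ext) (simp add: Es_def)
  show ?thesis unfolding e
    by (intro inR_sum inR_add inR_mul_lin bl_pc bl_qc inR_pdx S) auto
qed

lemma inR_Xop:
  fixes S :: "'n::finite sym"
  assumes S: "inR k S" shows "inR (k + 1) (Xop \<delta> K S)"
proof -
  have e: "Xop \<delta> K S = (\<lambda>x xi. (((\<Sum>j\<in>UNIV. qc xi j * pdx (ep j) S x xi - pc xi j * pdx (eq j) S x xi)
      + tc xi * Es S x xi) - (\<Sum>i\<in>UNIV. pc x i * (pc xi i * pdx et S x xi) + qc x i * (qc xi i * pdx et S x xi)))
      + (2 * (real CARD('n) + 1) * \<delta> + real K) * (tc xi * S x xi))"
    by (intro ext) (simp add: Xop_def Dop_def Es_xi_def sum_distrib_left sum_distrib_right algebra_simps)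
  show ?thesis unfolding e
    by (intro inR_add inR_diff inR_sum inR_cmult inR_mul_q inR_mul_p inR_mul_t inR_mul_lin bl_pc bl_qc
        inR_pdx inR_Es S) auto
qed

lemma inR_ialpha:
  fixes S :: "'n::finite sym"
  assumes S: "inR k S" shows "inR (k - 1) (ialpha S)"
proof -
  have e: "ialpha S = (\<lambda>x xi. (1/2) * ((\<Sum>i\<in>UNIV. pc x i * pdxi (eq i) S x xi - qc x i * pdxi (ep i) S x xi)
      - pdxi et S x xi))"
    by (intro ext) (simp add: ialpha_def)
  show ?thesis unfolding e
    by (intro inR_cmult inR_diff inR_sum inR_mul_lin bl_pc bl_qc inR_pdxi_q inR_pdxi_p inR_pdxi_t S) auto
qed

lemma ialpha_R0: "inR 0 S \<Longrightarrow> ialpha S = (\<lambda>x xi. 0)"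
  by (intro ext) (simp add: ialpha_def pdxi_R0)


lemma inR_Xpow: "inR d T \<Longrightarrow> inR (d + l) (Xpow \<delta> m l T)"
proof (induct l)
  case 0 then show ?case by simp
next
  case (Suc l)
  then have "inR (d + l + 1) (Xop \<delta> (m + l) (Xpow \<delta> m l T))" by (intro inR_Xop) auto
  then show ?case by simp
qed

lemma Xpow_lin:
  fixes S T :: "'n::finite sym"
  assumes S: "inR d1 S" and T: "inR d2 T"
  shows "Xpow \<delta> m l (\<lambda>x xi. S x xi + a * T x xi) = (\<lambda>x xi. Xpow \<delta> m l S x xi + a * Xpow \<delta> m l T x xi)"
proof (induct l)
  case 0 then show ?case by simp
next
  case (Suc l)
  show ?case using Xop_lin[OF inR_Xpow[OF S] inR_Xpow[OF T]] Suc by simp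
qed

lemma Xpow_zero: "Xpow \<delta> m l (\<lambda>x xi. 0) = (\<lambda>x xi. 0)"
  by (induct l) (auto simp: Xop_zero)

lemma inR_ipow: "inR d S \<Longrightarrow> inR (d - l) ((ialpha ^^ l) S)"
proof (induct l)
  case 0 then show ?case by simp
next
  case (Suc l)
  have "inR (d - l - 1) (ialpha ((ialpha ^^ l) S))" by (rule inR_ialpha[OF Suc(1)[OF Suc(2)]])
  moreover have "d - Suc l = d - l - 1" by arith
  moreover have "(ialpha ^^ Suc l) S = ialpha ((ialpha ^^ l) S)" by (rule funpow.simps(2)[THEN fun_cong, unfolded o_apply])
  ultimately show ?case by metis
qed

lemma ipow_lin:
  fixes S T :: "'n::finite sym"
  assumes S: "inR d1 S" and T: "inR d2 T"
  shows "(ialpha ^^ l) (\<lambda>x xi. S x xi + a * T x xi) = (\<lambda>x xi. (ialpha ^^ l) S x xi + a * (ialpha ^^ l) T x xi)"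
proof (induct l)
  case 0 then show ?case by simp
next
  case (Suc l)
  show ?case using ialpha_lin[OF inR_ipow[OF S] inR_ipow[OF T]] Suc by simp
qed

lemma rr_0: "rr n \<delta> 0 k = 0" by (simp add: rr_def)

lemma rr_Suc: "rr n \<delta> (real (Suc l)) k = rr n \<delta> (real l) k - ((real n + 1) * \<delta> + k + real l)"
  by (simp add: rr_def field_simps)

lemma IXpow:
  fixes T :: "'n::finite sym"
  assumes T: "inR \<mu> T"
  shows "ialpha (Xpow \<delta> \<mu> l T) = (\<lambda>x xi. Xpow \<delta> (\<mu> - 1) l (ialpha T) x xi
            + rr CARD('n) \<delta> (real l) (real \<mu>) * Xpow \<delta> \<mu> (l - 1) T x xi)"
proof (induct l)
  case 0 then show ?case by (simp add: rr_0)
next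
  case (Suc l)
  define V where "V = Xpow \<delta> \<mu> l T"
  have V: "inR (\<mu> + l) V" unfolding V_def by (rule inR_Xpow[OF T])
  have IV: "ialpha V = (\<lambda>x xi. Xpow \<delta> (\<mu> - 1) l (ialpha T) x xi
            + rr CARD('n) \<delta> (real l) (real \<mu>) * Xpow \<delta> \<mu> (l - 1) T x xi)"
    using Suc unfolding V_def .
  have c: "ialpha (Xop \<delta> (\<mu> + l) V) x xi = Xop \<delta> (\<mu> + l - 1) (ialpha V) x xi
     + (real (\<mu> + l) - real (\<mu> + l - 1) - 1) * tc xi * ialpha V x xi
     - ((real CARD('n) + 1) * \<delta> + real (\<mu> + l)) * V x xi" for x xi
    by (rule comm[OF V])
  have z: "(real (\<mu> + l) - real (\<mu> + l - 1) - 1) * tc xi * ialpha V x xi = 0" for x xi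
  proof (cases "\<mu> + l = 0")
    case True
    then have "inR 0 V" using V by simp
    then show ?thesis by (simp add: ialpha_R0)
  next
    case False
    then have "real (\<mu> + l - 1) = real (\<mu> + l) - 1" by (cases "\<mu> + l") auto
    then show ?thesis by simp
  qed
  have lin: "Xop \<delta> (\<mu> + l - 1) (ialpha V) = (\<lambda>x xi. Xop \<delta> (\<mu> + l - 1) (Xpow \<delta> (\<mu> - 1) l (ialpha T)) x xi
      + rr CARD('n) \<delta> (real l) (real \<mu>) * Xop \<delta> (\<mu> + l - 1) (Xpow \<delta> \<mu> (l - 1) T) x xi)"
    unfolding IV by (rule Xop_lin[OF inR_Xpow[OF inR_ialpha[OF T]] inR_Xpow[OF T]])
  have f1: "Xop \<delta> (\<mu> + l - 1) (Xpow \<delta> (\<mu> - 1) l (ialpha T)) = Xpow \<delta> (\<mu> - 1) (Suc l) (ialpha T)"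
  proof (cases "\<mu> = 0")
    case True
    then have "ialpha T = (\<lambda>x xi. 0)" using T ialpha_R0 by simp
    then have "Xpow \<delta> (\<mu> - 1) l (ialpha T) = (\<lambda>x xi. 0)" by (simp add: Xpow_zero)
    then show ?thesis by (simp add: Xop_zero)
  next
    case False
    then have "\<mu> - 1 + l = \<mu> + l - 1" by simp
    then show ?thesis by simp
  qed
  have f2: "rr CARD('n) \<delta> (real l) (real \<mu>) * Xop \<delta> (\<mu> + l - 1) (Xpow \<delta> \<mu> (l - 1) T) x xi
      = rr CARD('n) \<delta> (real l) (real \<mu>) * V x xi" for x xi
  proof (cases l)
    case 0 then show ?thesis by (simp add: rr_0)
  next
    case (Suc l')
    then show ?thesis unfolding V_def by simp
  qed
  show ?case
  proof (intro ext)
    fix x xi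
    have "ialpha (Xpow \<delta> \<mu> (Suc l) T) x xi = ialpha (Xop \<delta> (\<mu> + l) V) x xi" unfolding V_def by simp
    also have "\<dots> = Xpow \<delta> (\<mu> - 1) (Suc l) (ialpha T) x xi + rr CARD('n) \<delta> (real l) (real \<mu>) * V x xi
        - ((real CARD('n) + 1) * \<delta> + real (\<mu> + l)) * V x xi"
      unfolding c z lin f1 f2 by simp
    also have "\<dots> = Xpow \<delta> (\<mu> - 1) (Suc l) (ialpha T) x xi
        + rr CARD('n) \<delta> (real (Suc l)) (real \<mu>) * Xpow \<delta> \<mu> (Suc l - 1) T x xi"
      unfolding rr_Suc V_def by (simp add: algebra_simps)
    finally show "ialpha (Xpow \<delta> \<mu> (Suc l) T) x xi = Xpow \<delta> (\<mu> - 1) (Suc l) (ialpha T) x xi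
        + rr CARD('n) \<delta> (real (Suc l)) (real \<mu>) * Xpow \<delta> \<mu> (Suc l - 1) T x xi" .
  qed
qed


lemma ialpha_sum:
  fixes F :: "'i \<Rightarrow> 'n::finite sym"
  assumes "finite L" "\<And>l. l \<in> L \<Longrightarrow> inR d (F l)"
  shows "ialpha (\<lambda>x xi. \<Sum>l\<in>L. c l * F l x xi) = (\<lambda>x xi. \<Sum>l\<in>L. c l * ialpha (F l) x xi)"
  using assms
proof (induct L rule: finite_induct)
  case empty then show ?case by (simp add: ialpha_zero)
next
  case (insert l L)
  have R: "inR d (\<lambda>x xi. \<Sum>l\<in>L. c l * F l x xi)"
    using insert by (intro inR_sum inR_cmult) auto
  have "ialpha (\<lambda>x xi. \<Sum>l\<in>insert l L. c l * F l x xi) = ialpha (\<lambda>x xi. (\<Sum>l\<in>L. c l * F l x xi) + c l * F l x xi)"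
    using insert by (simp add: add.commute)
  also have "\<dots> = (\<lambda>x xi. ialpha (\<lambda>x xi. \<Sum>l\<in>L. c l * F l x xi) x xi + c l * ialpha (F l) x xi)"
    by (rule ialpha_lin[OF R]) (use insert in auto)
  also have "\<dots> = (\<lambda>x xi. \<Sum>l\<in>insert l L. c l * ialpha (F l) x xi)"
    using insert by (simp add: add.commute)
  finally show ?case .
qed

lemma ipow_zero: "(ialpha ^^ j) (\<lambda>x xi. 0) = (\<lambda>x xi. 0)"
  by (induct j) (auto simp: ialpha_zero)

lemma smap_alt:
  "smap \<delta> m S = (\<lambda>x xi. \<Sum>l\<in>{1..m+1}. (- bb CARD('n) \<delta> (m+1) l) * Xpow \<delta> (m + 1 - l) l ((ialpha ^^ (l - 1)) S) x xi)"
  for S :: "'n::finite sym"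
  by (intro ext) (simp add: smap_def sum_negf)

lemma inR_smap:
  fixes S :: "'n::finite sym"
  assumes S: "inR m S" shows "inR (m + 1) (smap \<delta> m S)"
  unfolding smap_alt
proof (intro inR_sum inR_cmult finite_atLeastAtMost)
  fix l assume l: "l \<in> {1..m+1}"
  have "inR (m - (l - 1) + l) (Xpow \<delta> (m + 1 - l) l ((ialpha ^^ (l - 1)) S))"
    by (rule inR_Xpow[OF inR_ipow[OF S]])
  moreover have "m - (l - 1) + l = m + 1" using l by auto
  ultimately show "inR (m + 1) (Xpow \<delta> (m + 1 - l) l ((ialpha ^^ (l - 1)) S))" by simp
qed

lemma smap_lin:
  fixes S T :: "'n::finite sym"
  assumes S: "inR m S" and T: "inR m T"
  shows "smap \<delta> m (\<lambda>x xi. S x xi + a * T x xi) = (\<lambda>x xi. smap \<delta> m S x xi + a * smap \<delta> m T x xi)"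
proof -
  have g: "\<And>(c::nat \<Rightarrow> real) A B L. (\<Sum>l\<in>L. c l * (A l + a * B l)) = (\<Sum>l\<in>L. c l * A l) + a * (\<Sum>l\<in>L. c l * B l)"
    by (simp add: sum.distrib sum_distrib_left algebra_simps)
  show ?thesis
    unfolding smap_alt ipow_lin[OF S T] Xpow_lin[OF inR_ipow[OF S] inR_ipow[OF T]] g ..
qed

lemma smap_zero: "smap \<delta> m (\<lambda>x xi. 0) = (\<lambda>x xi. 0)"
  unfolding smap_alt ipow_zero Xpow_zero by simp

lemma bb_0: "bb n \<delta> j 0 = 1" by (simp add: bb_def)

lemma bb_rec:
  assumes "l \<ge> 1" "rr n \<delta> (real l) (real j - real l) \<noteq> 0"
  shows "bb n \<delta> j l * rr n \<delta> (real l) (real j - real l) = - bb n \<delta> j (l - 1)"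
proof -
  obtain l' where l: "l = Suc l'" using assms(1) by (cases l) auto
  let ?f = "\<lambda>m. - rr n \<delta> (real m) (real j - real m)"
  have "(\<Prod>m\<in>{1..Suc l'}. ?f m) = (\<Prod>m\<in>{1..l'}. ?f m) * ?f (Suc l')"
    by (simp add: prod.cl_ivl_Suc)
  then show ?thesis using assms(2) unfolding bb_def l
    by (simp add: field_simps)
qed

lemma telescope: "(\<Sum>l\<in>{1..j}. g (l - 1) - g l) = g 0 - (g (j::nat) :: real)"
  by (induct j) (auto simp: sum.cl_ivl_Suc)

lemma ialpha_smap:
  fixes S :: "'n::finite sym"
  assumes S: "inR m S"
    and nz: "\<And>l. l \<in> {1..m+1} \<Longrightarrow> rr CARD('n) \<delta> (real l) (real (m+1) - real l) \<noteq> 0"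
  shows "ialpha (smap \<delta> m S) = S"
proof (intro ext)
  fix x xi
  let ?b = "bb CARD('n) \<delta> (m+1)"
  let ?F = "\<lambda>l. Xpow \<delta> (m + 1 - l) l ((ialpha ^^ (l - 1)) S)"
  define h where "h l = ?b l * Xpow \<delta> (m - l) l ((ialpha ^^ l) S) x xi" for l
  have RF: "inR (m + 1) (?F l)" if "l \<in> {1..m+1}" for l
  proof -
    have "inR (m - (l - 1) + l) (?F l)" by (rule inR_Xpow[OF inR_ipow[OF S]])
    moreover have "m - (l - 1) + l = m + 1" using that by auto
    ultimately show ?thesis by simp
  qed
  have "ialpha (smap \<delta> m S) x xi = (\<Sum>l\<in>{1..m+1}. (- ?b l) * ialpha (?F l) x xi)"
    unfolding smap_alt by (subst ialpha_sum[OF finite_atLeastAtMost RF]) auto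
  also have "\<dots> = (\<Sum>l\<in>{1..m+1}. h (l - 1) - h l)"
  proof (intro sum.cong refl)
    fix l assume l: "l \<in> {1..m+1}"
    then obtain l' where l': "l = Suc l'" by (cases l) auto
    have T: "inR (m + 1 - l) ((ialpha ^^ (l - 1)) S)"
    proof -
      have "inR (m - (l - 1)) ((ialpha ^^ (l - 1)) S)" by (rule inR_ipow[OF S])
      moreover have "m - (l - 1) = m + 1 - l" using l by auto
      ultimately show ?thesis by simp
    qed
    have i1: "ialpha ((ialpha ^^ (l - 1)) S) = (ialpha ^^ l) S" using l' by simp
    have i2: "m + 1 - l - 1 = m - l" by arith
    have i3: "real (m + 1 - l) = real (m + 1) - real l" using l by (auto simp: of_nat_diff)
    have i4: "m + 1 - l = m - (l - 1)" using l by arith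
    have IX0: "ialpha (?F l) = (\<lambda>x xi. Xpow \<delta> (m - l) l ((ialpha ^^ l) S) x xi
        + rr CARD('n) \<delta> (real l) (real (m + 1) - real l) * Xpow \<delta> (m + 1 - l) (l - 1) ((ialpha ^^ (l - 1)) S) x xi)"
      using IXpow[OF T, of \<delta> l] unfolding i1 i2 i3 .
    have IX: "ialpha (?F l) x xi = Xpow \<delta> (m - l) l ((ialpha ^^ l) S) x xi
        + rr CARD('n) \<delta> (real l) (real (m + 1) - real l) * Xpow \<delta> (m + 1 - l) (l - 1) ((ialpha ^^ (l - 1)) S) x xi"
      unfolding IX0 ..
    have br: "?b l * rr CARD('n) \<delta> (real l) (real (m + 1) - real l) = - ?b (l - 1)"
      using bb_rec[of l "CARD('n)" \<delta> "m+1"] nz[OF l] l by simp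
    show "(- ?b l) * ialpha (?F l) x xi = h (l - 1) - h l"
    proof -
      have "(- ?b l) * ialpha (?F l) x xi = - (?b l * Xpow \<delta> (m - l) l ((ialpha ^^ l) S) x xi)
         - (?b l * rr CARD('n) \<delta> (real l) (real (m + 1) - real l)) * Xpow \<delta> (m + 1 - l) (l - 1) ((ialpha ^^ (l - 1)) S) x xi"
        unfolding IX by (simp add: algebra_simps)
      also have "\<dots> = h (l - 1) - h l" unfolding br h_def i4[symmetric] by simp
      finally show ?thesis .
    qed
  qed
  also have "\<dots> = h 0 - h (m + 1)" by (rule telescope)
  also have "h 0 = S x xi" unfolding h_def by (simp add: bb_0)
  also have "h (m + 1) = 0"
  proof -
    have "inR 0 ((ialpha ^^ m) S)" using inR_ipow[OF S, of m] by simp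
    then have "(ialpha ^^ (m + 1)) S = (\<lambda>x xi. 0)" by (simp add: ialpha_R0)
    then show ?thesis unfolding h_def by (simp add: Xpow_zero)
  qed
  finally show "ialpha (smap \<delta> m S) x xi = S x xi" by simp
qed

lemma inR_spow: "l \<le> k \<Longrightarrow> inR (k - l) S \<Longrightarrow> inR k (spow \<delta> k l S)"
proof (induct l arbitrary: k)
  case 0 then show ?case by simp
next
  case (Suc l)
  have k: "k - 1 + 1 = k" "k - 1 - l = k - Suc l" "l \<le> k - 1" using Suc(2) by arith+
  have "inR (k - 1) (spow \<delta> (k - 1) l S)" using Suc(1)[of "k - 1"] Suc(3) k by simp
  then have "inR (k - 1 + 1) (smap \<delta> (k - 1) (spow \<delta> (k - 1) l S))" by (rule inR_smap)
  then show ?case using k by simp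
qed


lemma zero_sym: "(0 :: 'n::finite sym) = (\<lambda>x xi. 0)" by (simp add: fun_eq_iff)

lemma ialpha_sum':
  fixes F :: "'i \<Rightarrow> 'n::finite sym"
  assumes "finite L" "\<And>l. l \<in> L \<Longrightarrow> inR d (F l)"
  shows "ialpha (\<Sum>l\<in>L. F l) = (\<Sum>l\<in>L. ialpha (F l))"
proof -
  have "(\<Sum>l\<in>L. F l) = (\<lambda>x xi. \<Sum>l\<in>L. 1 * F l x xi)" by (simp add: fun_eq_iff sum_sym_app)
  then have "ialpha (\<Sum>l\<in>L. F l) = (\<lambda>x xi. \<Sum>l\<in>L. 1 * ialpha (F l) x xi)"
    using ialpha_sum[OF assms, where c = "\<lambda>_. 1"] by simp
  then show ?thesis by (simp add: fun_eq_iff sum_sym_app)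
qed

lemma smap_sum:
  fixes g :: "'i \<Rightarrow> 'n::finite sym"
  assumes "finite L" "\<And>l. l \<in> L \<Longrightarrow> inR m (g l)"
  shows "smap \<delta> m (\<Sum>l\<in>L. g l) = (\<Sum>l\<in>L. smap \<delta> m (g l))"
  using assms
proof (induct L rule: finite_induct)
  case empty then show ?case by (simp add: zero_sym smap_zero)
next
  case (insert l L)
  have R: "inR m (\<Sum>l\<in>L. g l)" using insert by (intro inR_sum') auto
  have gl: "inR m (g l)" using insert by auto
  have "(\<Sum>l\<in>insert l L. g l) = (\<lambda>x xi. (\<Sum>l\<in>L. g l) x xi + 1 * g l x xi)"
    using insert by (simp add: fun_eq_iff add.commute)
  then have "smap \<delta> m (\<Sum>l\<in>insert l L. g l) = (\<lambda>x xi. smap \<delta> m (\<Sum>l\<in>L. g l) x xi + 1 * smap \<delta> m (g l) x xi)"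
    using smap_lin[OF R gl, where a = 1 and \<delta> = \<delta>] by simp
  also have "\<dots> = (\<Sum>l\<in>insert l L. smap \<delta> m (g l))"
    using insert by (simp add: fun_eq_iff add.commute)
  finally show ?case .
qed

lemma nz_from_assm:
  assumes H: "\<forall>j\<in>{1..k}. \<forall>p\<in>{j-1..2*j-2}. \<delta> \<noteq> - real p / (2 * (real CARD('n::finite) + 1))"
    and j: "j \<in> {1..k}" and l: "l \<in> {1..j}"
  shows "rr CARD('n) \<delta> (real l) (real j - real l) \<noteq> 0"
proof
  assume z: "rr CARD('n) \<delta> (real l) (real j - real l) = 0"
  let ?N = "real CARD('n) + 1"
  have Npos: "?N > 0" by simp
  have "2 * ?N * \<delta> + 2 * (real j - real l) + real l - 1 = 0"
    using z l unfolding rr_def by auto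
  then have d: "\<delta> = - (2 * real j - real l - 1) / (2 * ?N)"
    using Npos by (simp add: field_simps) 
  define p where "p = 2 * j - l - 1"
  have rp: "real p = 2 * real j - real l - 1" using l unfolding p_def by (auto simp: of_nat_diff)
  have pin: "p \<in> {j-1..2*j-2}" using l unfolding p_def by auto
  have e: "\<delta> = - real p / (2 * ?N)" using d rp by simp
  from H j have "\<forall>p\<in>{j-1..2*j-2}. \<delta> \<noteq> - real p / (2 * ?N)" by blast
  with pin have "\<delta> \<noteq> - real p / (2 * ?N)" by blast
  with e show False by blast
qed


lemma sum_shift0: "(\<Sum>l\<in>{0..Suc n}. g l) = g 0 + (\<Sum>l\<in>{0..n}. g (Suc l))"
  unfolding sum.atLeast0_atMost_Suc_shift o_def ..

lemma Wsum_R: "l \<le> k \<Longrightarrow> f \<in> Wsum \<delta> k l \<Longrightarrow> inR k f"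
  unfolding Wsum_def by (auto intro: inR_spow)

lemma Wsum_all_R:
  assumes A: "\<forall>l\<in>{0..k}. f l \<in> Wsum \<delta> k l" and B: "l \<in> {0..k}"
  shows "inR k (f l)"
proof -
  have 1: "f l \<in> Wsum \<delta> k l" using bspec[OF A B] .
  have 2: "l \<le> k" using B by simp
  show ?thesis by (rule Wsum_R[OF 2 1])
qed

lemma Wsum_Suc:
  fixes g :: "'n::finite sym"
  assumes "g \<in> Wsum \<delta> k0 l" shows "smap \<delta> k0 g \<in> Wsum \<delta> (Suc k0) (Suc l)"
proof -
  obtain h where h: "inR (k0 - l) h" "ialpha h = 0" "g = spow \<delta> k0 l h"
    using assms unfolding Wsum_def by auto
  have "smap \<delta> k0 g = spow \<delta> (Suc k0) (Suc l) h" using h(3) by simp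
  then show ?thesis unfolding Wsum_def using h by auto
qed

lemma Wsum_Suc_inv:
  fixes f :: "'n::finite sym"
  assumes "f \<in> Wsum \<delta> (Suc k0) (Suc l)" shows "\<exists>g. g \<in> Wsum \<delta> k0 l \<and> f = smap \<delta> k0 g"
proof -
  obtain h where h: "inR (Suc k0 - Suc l) h" "ialpha h = 0" "f = spow \<delta> (Suc k0) (Suc l) h"
    using assms unfolding Wsum_def by auto
  have "spow \<delta> k0 l h \<in> Wsum \<delta> k0 l" unfolding Wsum_def using h by auto
  moreover have "f = smap \<delta> k0 (spow \<delta> k0 l h)" using h(3) by simp
  ultimately show ?thesis by blast
qed

lemma Wsum_0: "f \<in> Wsum \<delta> k 0 \<longleftrightarrow> inR k f \<and> ialpha f = 0"
  unfolding Wsum_def by auto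

lemma decomp:
  fixes \<delta> :: real and K :: nat
  assumes nzK: "\<And>j l. j \<in> {1..K} \<Longrightarrow> l \<in> {1..j} \<Longrightarrow> rr CARD('n::finite) \<delta> (real l) (real j - real l) \<noteq> 0"
  shows "k \<le> K \<Longrightarrow> (\<forall>S :: 'n sym. inR k S \<longleftrightarrow>
            (\<exists>f. (\<forall>l\<in>{0..k}. f l \<in> Wsum \<delta> k l) \<and> S = (\<Sum>l\<in>{0..k}. f l)))
       \<and> (\<forall>f :: nat \<Rightarrow> 'n sym. (\<forall>l\<in>{0..k}. f l \<in> Wsum \<delta> k l) \<and> (\<Sum>l\<in>{0..k}. f l) = 0
            \<longrightarrow> (\<forall>l\<in>{0..k}. f l = 0))"
proof (induct k)
  case 0
  have W: "S \<in> Wsum \<delta> 0 0 \<longleftrightarrow> inR 0 S" for S :: "'n sym"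
  proof -
    have "inR 0 S \<Longrightarrow> ialpha S = 0" using ialpha_R0[of S] zero_sym by simp
    then show ?thesis unfolding Wsum_0 by blast
  qed
  show ?case
  proof (intro conjI allI impI)
    fix S :: "'n sym"
    show "inR 0 S \<longleftrightarrow> (\<exists>f. (\<forall>l\<in>{0..0}. f l \<in> Wsum \<delta> 0 l) \<and> S = (\<Sum>l\<in>{0..0}. f l))"
    proof
      assume "inR 0 S"
      then show "\<exists>f. (\<forall>l\<in>{0..0}. f l \<in> Wsum \<delta> 0 l) \<and> S = (\<Sum>l\<in>{0..0}. f l)"
        using W by (intro exI[of _ "\<lambda>_. S"]) simp
    next
      assume "\<exists>f. (\<forall>l\<in>{0..0}. f l \<in> Wsum \<delta> 0 l) \<and> S = (\<Sum>l\<in>{0..0}. f l)"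
      then obtain f where "f 0 \<in> Wsum \<delta> 0 0" "S = f 0" by auto
      then show "inR 0 S" using W by simp
    qed
  next
    fix f :: "nat \<Rightarrow> 'n sym"
    assume "(\<forall>l\<in>{0..0}. f l \<in> Wsum \<delta> 0 l) \<and> (\<Sum>l\<in>{0..0}. f l) = 0"
    then show "\<forall>l\<in>{0..0}. f l = 0" by simp
  qed
next
  case (Suc k0)
  have IH: "(\<forall>S :: 'n sym. inR k0 S \<longleftrightarrow>
            (\<exists>f. (\<forall>l\<in>{0..k0}. f l \<in> Wsum \<delta> k0 l) \<and> S = (\<Sum>l\<in>{0..k0}. f l)))
       \<and> (\<forall>f :: nat \<Rightarrow> 'n sym. (\<forall>l\<in>{0..k0}. f l \<in> Wsum \<delta> k0 l) \<and> (\<Sum>l\<in>{0..k0}. f l) = 0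
            \<longrightarrow> (\<forall>l\<in>{0..k0}. f l = 0))"
    using Suc(2) by (intro Suc(1)) arith
  have Is: "ialpha (smap \<delta> k0 T) = T" if "inR k0 T" for T :: "'n sym"
  proof (rule ialpha_smap[OF that])
    fix l assume "l \<in> {1..k0+1}"
    then show "rr CARD('n) \<delta> (real l) (real (k0 + 1) - real l) \<noteq> 0"
      using nzK[of "k0 + 1" l] Suc(2) by auto
  qed
  show ?case
  proof (intro conjI allI impI iffI)
    fix S :: "'n sym" assume S: "inR (Suc k0) S"
    define T where "T = ialpha S"
    have T: "inR k0 T" unfolding T_def using inR_ialpha[OF S] by simp
    have "\<exists>f. (\<forall>l\<in>{0..k0}. f l \<in> Wsum \<delta> k0 l) \<and> T = (\<Sum>l\<in>{0..k0}. f l)"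
      using iffD1[OF IH[THEN conjunct1, THEN spec, of T] T] .
    then obtain g where g: "\<forall>l\<in>{0..k0}. g l \<in> Wsum \<delta> k0 l" "T = (\<Sum>l\<in>{0..k0}. g l)"
      by (elim exE conjE)
    have gR: "inR k0 (g l)" if "l \<in> {0..k0}" for l
    proof -
      have "g l \<in> Wsum \<delta> k0 l" using g(1) that by blast
      then show ?thesis by (rule Wsum_R[rotated]) (use that in simp)
    qed
    define f where "f l = (if l = 0 then (\<lambda>x xi. S x xi + (-1) * smap \<delta> k0 T x xi) else smap \<delta> k0 (g (l - 1)))" for l
    have sT: "inR (Suc k0) (smap \<delta> k0 T)" using inR_smap[OF T] by simp
    have f0: "f 0 \<in> Wsum \<delta> (Suc k0) 0"
    proof -
      have "inR (Suc k0) (f 0)" unfolding f_def using inR_add[OF S inR_cmult[OF sT, of "-1"]] by simp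
      moreover have "ialpha (f 0) = 0"
        unfolding f_def using ialpha_lin[OF S sT, of "-1"] Is[OF T] by (simp add: T_def zero_sym)
      ultimately show ?thesis unfolding Wsum_0 by simp
    qed
    have fS: "f (Suc l) \<in> Wsum \<delta> (Suc k0) (Suc l)" if "l \<in> {0..k0}" for l
    proof -
      have "g l \<in> Wsum \<delta> k0 l" using g(1) that by blast
      then show ?thesis unfolding f_def by (simp add: Wsum_Suc)
    qed
    show "\<exists>f. (\<forall>l\<in>{0..Suc k0}. f l \<in> Wsum \<delta> (Suc k0) l) \<and> S = (\<Sum>l\<in>{0..Suc k0}. f l)"
    proof (intro exI conjI ballI)
      fix l assume "l \<in> {0..Suc k0}"
      then show "f l \<in> Wsum \<delta> (Suc k0) l" using f0 fS by (cases l) auto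
    next
      have "(\<Sum>l\<in>{0..Suc k0}. f l) = f 0 + (\<Sum>l\<in>{0..k0}. f (Suc l))"
        by (rule sum_shift0)
      also have "(\<Sum>l\<in>{0..k0}. f (Suc l)) = (\<Sum>l\<in>{0..k0}. smap \<delta> k0 (g l))"
        unfolding f_def by simp
      also have "\<dots> = smap \<delta> k0 T" unfolding g(2) by (rule smap_sum[symmetric]) (use gR in auto)
      finally show "S = (\<Sum>l\<in>{0..Suc k0}. f l)" unfolding f_def by (simp add: fun_eq_iff)
    qed
  next
    fix S :: "'n sym"
    assume "\<exists>f. (\<forall>l\<in>{0..Suc k0}. f l \<in> Wsum \<delta> (Suc k0) l) \<and> S = (\<Sum>l\<in>{0..Suc k0}. f l)"
    then obtain f where f: "\<forall>l\<in>{0..Suc k0}. f l \<in> Wsum \<delta> (Suc k0) l" "S = (\<Sum>l\<in>{0..Suc k0}. f l)" by blast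
    show "inR (Suc k0) S" unfolding f(2) by (rule inR_sum'[OF finite_atLeastAtMost Wsum_all_R[OF f(1)]])
  next
    fix f :: "nat \<Rightarrow> 'n sym"
    assume f: "(\<forall>l\<in>{0..Suc k0}. f l \<in> Wsum \<delta> (Suc k0) l) \<and> (\<Sum>l\<in>{0..Suc k0}. f l) = 0"
    have "\<forall>l\<in>{0..k0}. \<exists>g. g \<in> Wsum \<delta> k0 l \<and> f (Suc l) = smap \<delta> k0 g"
    proof
      fix l assume "l \<in> {0..k0}"
      then have "f (Suc l) \<in> Wsum \<delta> (Suc k0) (Suc l)" using f by simp
      then show "\<exists>g. g \<in> Wsum \<delta> k0 l \<and> f (Suc l) = smap \<delta> k0 g" by (rule Wsum_Suc_inv)
    qed
    then obtain g where g0': "\<forall>l\<in>{0..k0}. g l \<in> Wsum \<delta> k0 l \<and> f (Suc l) = smap \<delta> k0 (g l)"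
      by (rule bchoice[THEN exE])
    then have g: "\<And>l. l \<in> {0..k0} \<Longrightarrow> g l \<in> Wsum \<delta> k0 l \<and> f (Suc l) = smap \<delta> k0 (g l)"
      by blast
    have gR: "inR k0 (g l)" if "l \<in> {0..k0}" for l using Wsum_R[of l k0 "g l" \<delta>] g[OF that] that by simp
    have fR: "inR (Suc k0) (f l)" if "l \<in> {0..Suc k0}" for l using Wsum_all_R[OF conjunct1[OF f] that] .
    have "f 0 \<in> Wsum \<delta> (Suc k0) 0" using bspec[OF conjunct1[OF f], of 0] by simp
    then have f0: "ialpha (f 0) = 0" unfolding Wsum_0 by simp
    have "ialpha (\<Sum>l\<in>{0..Suc k0}. f l) = (\<Sum>l\<in>{0..Suc k0}. ialpha (f l))"
      by (rule ialpha_sum') (use fR in auto)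
    also have "\<dots> = ialpha (f 0) + (\<Sum>l\<in>{0..k0}. ialpha (f (Suc l)))"
      by (rule sum_shift0)
    also have "(\<Sum>l\<in>{0..k0}. ialpha (f (Suc l))) = (\<Sum>l\<in>{0..k0}. g l)"
      using g Is gR by (intro sum.cong refl) auto
    finally have ch: "ialpha (\<Sum>l\<in>{0..Suc k0}. f l) = ialpha (f 0) + (\<Sum>l\<in>{0..k0}. g l)" .
    have "ialpha (\<Sum>l\<in>{0..Suc k0}. f l) = 0"
      unfolding conjunct2[OF f] zero_sym by (rule ialpha_zero)
    then have "(\<Sum>l\<in>{0..k0}. g l) = 0" using ch f0 by (metis add.left_neutral)
    moreover have "\<forall>l\<in>{0..k0}. g l \<in> Wsum \<delta> k0 l" using g by blast
    ultimately have g0all: "\<forall>l\<in>{0..k0}. g l = 0"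
      using IH[THEN conjunct2, THEN spec[of _ g]] by blast
    have g0: "g l = 0" if "l \<in> {0..k0}" for l using g0all that by blast
    have fS0: "f (Suc l) = 0" if "l \<in> {0..k0}" for l
      using g[OF that] g0[OF that] by (simp add: zero_sym smap_zero)
    have "(\<Sum>l\<in>{0..Suc k0}. f l) = f 0 + (\<Sum>l\<in>{0..k0}. f (Suc l))"
      by (rule sum_shift0)
    also have "(\<Sum>l\<in>{0..k0}. f (Suc l)) = 0" using fS0 by simp
    finally have "(\<Sum>l\<in>{0..Suc k0}. f l) = f 0 + 0" .
    then have f00: "f 0 = 0" using conjunct2[OF f] by (metis add.right_neutral)
    show "\<forall>l\<in>{0..Suc k0}. f l = 0"
    proof
      fix l assume l: "l \<in> {0..Suc k0}"
      show "f l = 0"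
      proof (cases l)
        case 0 then show ?thesis using f00 by simp
      next
        case (Suc l')
        then have "l' \<in> {0..k0}" using l by simp
        then show ?thesis using fS0 Suc by simp
      qed
    qed
  qed
qed

theorem corollary5p2:
  fixes \<delta> :: real and k :: nat
  assumes "k \<ge> 1"
    and "\<forall>j\<in>{1..k}. \<forall>p\<in>{j-1..2*j-2}. \<delta> \<noteq> - real p / (2 * (real CARD('n::finite) + 1))"
  shows "(\<forall>S :: 'n sym. inR k S \<longleftrightarrow>
            (\<exists>f. (\<forall>l\<in>{0..k}. f l \<in> Wsum \<delta> k l) \<and> S = (\<Sum>l\<in>{0..k}. f l)))
       \<and> (\<forall>f :: nat \<Rightarrow> 'n sym. (\<forall>l\<in>{0..k}. f l \<in> Wsum \<delta> k l) \<and> (\<Sum>l\<in>{0..k}. f l) = 0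
            \<longrightarrow> (\<forall>l\<in>{0..k}. f l = 0))"
  by (rule decomp[OF nz_from_assm[OF assms(2)]]) auto


end
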